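(* Consider a general state space model as described in the context, with observations $y_1,y_2,\dots$ held fixed, and the i.i.d. Monte Carlo filter $f^N_{t|t}$. Assume that the transition densities do not depend on $t$, $a_t=a$ for all $t\ge1$, that $x\mapsto a(x,\cdot)$ is continuous into $L_1(\mu)$, that there exist a probability density $h$ and constants $0<c_a\le C_a<\infty$ with $$c_a h(x)\le a(x',x)\le C_a h(x)\quad\text{for all }x,x',$$ and that the observation densities are positive and satisfy $$C_b:=\sup_{t,x,x',y}\frac{b_t(x,y)}{b_t(x',y)}<\infty .$$ Then for every $\varepsilon>0$ there are constants $c_1,c_2$ such that for all $t$ and all $N$, $$\mathbf P\big[\|f^N_{t|t}-f_{t|t}\|_1>\varepsilon\big]\le c_1\exp(-c_2N).$$
   Context: State space model: the state space $E$ is a complete separable metric space with Borel $\sigma$-field and a reference measure $\mu$; observation space with measure $\nu$. $(X_t)$ is a Markov chain with $X_0\sim a_0\,d\mu$ and $X_t\mid X_{t-1}=x'\sim a_t(x',x)\,d\mu(x)$; conditionally on $(X_t)$ the $Y_t$ are independent with $Y_t\mid X_t=x\sim b_t(x,y)\,d\nu(y)$. With observations $y_1,y_2,\dots$ fixed, $f_{t|t}$ is the conditional density of $X_t$ given $Y_{1:t}=y_{1:t}$: $f_{0|0}=a_0$, $f_{t|t}(x)\propto b_t(x,y_t)\int f_{t-1|t-1}(x')a_t(x',x)\,d\mu(x')$. Monte Carlo filter: $x_{1,0},\dots,x_{N,0}$ i.i.d. from $f^N_{0|0}=a_0$; given the particles up to time $t-1$, $x_{1,t},\dots,x_{N,t}$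 are i.i.d. from $f^N_{t|t}(x)\propto b_t(x,y_t)\frac1N\sum_{j=1}^N a_t(x_{j,t-1},x)$. $\|\cdot\|_1$ is the $L_1(\mu)$ norm; probabilities refer only to the Monte Carlo randomness. *)

theory Defs
  imports "HOL-Probability.Probability"
begin

primrec opt_filter ::
  "'a measure \<Rightarrow> ('a \<Rightarrow> real) \<Rightarrow> ('a \<Rightarrow> 'a \<Rightarrow> real) \<Rightarrow>
   (nat \<Rightarrow> 'a \<Rightarrow> 'b \<Rightarrow> real) \<Rightarrow> (nat \<Rightarrow> 'b) \<Rightarrow> nat \<Rightarrow> 'a \<Rightarrow> real" where
  "opt_filter mu a0 a b y 0 = a0"
| "opt_filter mu a0 a b y (Suc t) =
     (let g = (\<lambda>x. b (Suc t) x (y (Suc t)) *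
                    (\<integral>x'. opt_filter mu a0 a b y t x' * a x' x \<partial>mu))
      in (\<lambda>x. g x / (\<integral>z. g z \<partial>mu)))"

text \<open>Monte Carlo filter density f^N_{t|t}, as a function of the particle cloud
  xs 0, ..., xs (N-1) at time t-1 (for t = 0 it is a0).\<close>
definition mc_filter ::
  "'a measure \<Rightarrow> ('a \<Rightarrow> real) \<Rightarrow> ('a \<Rightarrow> 'a \<Rightarrow> real) \<Rightarrow>
   (nat \<Rightarrow> 'a \<Rightarrow> 'b \<Rightarrow> real) \<Rightarrow> (nat \<Rightarrow> 'b) \<Rightarrow> nat \<Rightarrow> nat \<Rightarrow> (nat \<Rightarrow> 'a) \<Rightarrow> 'a \<Rightarrow> real" where
  "mc_filter mu a0 a b y N t xs =
     (case t of 0 \<Rightarrow> a0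
      | Suc s \<Rightarrow>
         (let g = (\<lambda>x. b (Suc s) x (y (Suc s)) * ((\<Sum>j<N. a (xs j) x) / real N))
          in (\<lambda>x. g x / (\<integral>z. g z \<partial>mu))))"

text \<open>Joint law of the particle cloud (x_{1,t},...,x_{N,t}) (indexed 0..N-1):
  i.i.d. from a0 at time 0; given the cloud at time t, i.i.d. from f^N_{t+1|t+1}.\<close>
primrec mc_particles ::
  "'a measure \<Rightarrow> ('a \<Rightarrow> real) \<Rightarrow> ('a \<Rightarrow> 'a \<Rightarrow> real) \<Rightarrow>
   (nat \<Rightarrow> 'a \<Rightarrow> 'b \<Rightarrow> real) \<Rightarrow> (nat \<Rightarrow> 'b) \<Rightarrow> nat \<Rightarrow> nat \<Rightarrow> (nat \<Rightarrow> 'a) measure" where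
  "mc_particles mu a0 a b y N 0 =
     PiM {..<N} (\<lambda>_. density mu (\<lambda>x. ennreal (a0 x)))"
| "mc_particles mu a0 a b y N (Suc t) =
     bind (mc_particles mu a0 a b y N t)
       (\<lambda>xs. PiM {..<N} (\<lambda>_. density mu (\<lambda>x. ennreal (mc_filter mu a0 a b y N (Suc t) xs x))))"

text \<open>P[ ||f^N_{t|t} - f_{t|t}||_1 > eps ]: f^N_{t|t} is a function of the cloud at
  time t-1 (for t = 0 it is deterministic).\<close>
definition mc_error_prob ::
  "'a measure \<Rightarrow> ('a \<Rightarrow> real) \<Rightarrow> ('a \<Rightarrow> 'a \<Rightarrow> real) \<Rightarrow>
   (nat \<Rightarrow> 'a \<Rightarrow> 'b \<Rightarrow> real) \<Rightarrow> (nat \<Rightarrow> 'b) \<Rightarrow> nat \<Rightarrow> nat \<Rightarrow> real \<Rightarrow> real" where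
  "mc_error_prob mu a0 a b y N t eps =
     measure (mc_particles mu a0 a b y N (t - 1))
       {xs \<in> space (mc_particles mu a0 a b y N (t - 1)).
          (\<integral>\<^sup>+ x. ennreal \<bar>mc_filter mu a0 a b y N t xs x - opt_filter mu a0 a b y t x\<bar> \<partial>mu)
            > ennreal eps}"

end

theory Submission
  imports Defs
begin


locale flt =
  fixes mu :: "'a measure" and a :: "'a \<Rightarrow> 'a \<Rightarrow> real" and h :: "'a \<Rightarrow> real"
    and ca Ca :: real and B :: "nat \<Rightarrow> 'a \<Rightarrow> real" and Cb :: real
  assumes sf: "sigma_finite_measure mu" and space_mu: "space mu = UNIV"
    and a_meas: "(\<lambda>(x', x). a x' x) \<in> borel_measurable (mu \<Otimes>\<^sub>M mu)"
    and h_meas[measurable]: "h \<in> borel_measurable mu"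
    and h_nonneg: "\<And>x. h x \<ge> 0"
    and h_int: "integrable mu h" and h_one: "(\<integral>x. h x \<partial>mu) = 1"
    and ca_pos: "0 < ca" and ca_Ca: "ca \<le> Ca"
    and a_bounds: "\<And>x' x. ca * h x \<le> a x' x \<and> a x' x \<le> Ca * h x"
    and B_meas[measurable]: "\<And>n. B n \<in> borel_measurable mu"
    and B_pos: "\<And>n x. B n x > 0"
    and B_ratio: "\<And>n x x'. B n x \<le> Cb * B n x'"
begin

interpretation mu: sigma_finite_measure mu by (rule sf)

lemma a_meas2[measurable (raw)]:
  assumes "f \<in> M \<rightarrow>\<^sub>M mu" "g \<in> M \<rightarrow>\<^sub>M mu"
  shows "(\<lambda>z. a (f z) (g z)) \<in> borel_measurable M"
  using measurable_compose[OF measurable_Pair[OF assms] a_meas] by simp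

lemma Cb_ge1: "1 \<le> Cb"
  using B_ratio[of 0 undefined undefined] B_pos[of 0 undefined] by simp

lemma Cb_pos: "0 < Cb" using Cb_ge1 by simp

lemma a_nonneg: "0 \<le> a x' x"
  using a_bounds[of x x'] h_nonneg[of x] ca_pos by (smt (verit) mult_nonneg_nonneg)

lemma Ca_pos: "0 < Ca" using ca_pos ca_Ca by simp

definition A :: "('a \<Rightarrow> real) \<Rightarrow> 'a \<Rightarrow> real" where "A p x = (\<integral>x'. p x' * a x' x \<partial>mu)"
definition Psi :: "nat \<Rightarrow> ('a \<Rightarrow> real) \<Rightarrow> 'a \<Rightarrow> real" where "Psi n V x = B n x * V x / (\<integral>z. B n z * V z \<partial>mu)"
definition Phi :: "nat \<Rightarrow> ('a \<Rightarrow> real) \<Rightarrow> 'a \<Rightarrow> real" where "Phi n p = Psi n (A p)"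
definition d1 :: "('a \<Rightarrow> real) \<Rightarrow> ('a \<Rightarrow> real) \<Rightarrow> real" where "d1 f g = (\<integral>x. \<bar>f x - g x\<bar> \<partial>mu)"
definition good :: "('a \<Rightarrow> real) \<Rightarrow> bool" where "good p \<longleftrightarrow> p \<in> borel_measurable mu \<and> (\<forall>x. 0 \<le> p x) \<and> integrable mu p \<and> (\<integral>x. p x \<partial>mu) = 1"
definition pred :: "('a \<Rightarrow> real) \<Rightarrow> bool" where "pred V \<longleftrightarrow> V \<in> borel_measurable mu \<and> (\<forall>x. ca * h x \<le> V x \<and> V x \<le> Ca * h x)"

primrec prp :: "nat \<Rightarrow> nat \<Rightarrow> ('a \<Rightarrow> real) \<Rightarrow> 'a \<Rightarrow> real" where
  "prp s 0 p = p"
| "prp s (Suc k) p = Phi (s + k) (prp s k p)"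

definition "B0 n = B n undefined"

lemma B_up: "B n x \<le> Cb * B0 n" unfolding B0_def by (rule B_ratio)
lemma B_low: "B0 n / Cb \<le> B n x"
  using B_ratio[of n undefined x] Cb_pos unfolding B0_def by (simp add: field_simps)
lemma B0_pos: "0 < B0 n" unfolding B0_def using B_pos by simp

lemma pred_int: "pred V \<Longrightarrow> integrable mu V"
  unfolding pred_def
  apply (rule Bochner_Integration.integrable_bound[where f="\<lambda>x. Ca * h x"])
  using h_int h_nonneg ca_pos Ca_pos
  by (auto intro!: AE_I2 simp: abs_le_iff) (smt (verit) mult_nonneg_nonneg)+

lemma pred_nonneg: "pred V \<Longrightarrow> 0 \<le> V x"
  unfolding pred_def using h_nonneg[of x] ca_pos by (smt (verit) mult_nonneg_nonneg)

lemma BV_int: "pred V \<Longrightarrow> integrable mu (\<lambda>x. B n x * V x)"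
proof -
  assume V: "pred V"
  then have m[measurable]: "V \<in> borel_measurable mu" using pred_def by simp
  show ?thesis
  proof (rule Bochner_Integration.integrable_bound[where f="\<lambda>x. (Cb * B0 n) * V x"])
    show "integrable mu (\<lambda>x. (Cb * B0 n) * V x)" using pred_int[OF V] by simp
    show "(\<lambda>x. B n x * V x) \<in> borel_measurable mu" by measurable
    show "AE x in mu. norm (B n x * V x) \<le> norm (Cb * B0 n * V x)"
    proof (rule AE_I2)
      fix x
      have "0 \<le> V x" using pred_nonneg[OF V] .
      moreover have "0 < B n x" using B_pos .
      moreover have "0 < Cb * B0 n" using Cb_pos B0_pos by simp
      ultimately show "norm (B n x * V x) \<le> norm (Cb * B0 n * V x)"
        using B_up[of n x] Cb_pos B0_pos[of n] by (simp add: abs_mult mult_right_mono)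
    qed
  qed
qed

lemma Z_low: "pred V \<Longrightarrow> B0 n / Cb * ca \<le> (\<integral>z. B n z * V z \<partial>mu)"
proof -
  assume V: "pred V"
  have "(\<integral>z. (B0 n / Cb * ca) * h z \<partial>mu) \<le> (\<integral>z. B n z * V z \<partial>mu)"
  proof (rule integral_mono)
    show "integrable mu (\<lambda>z. (B0 n / Cb * ca) * h z)" using h_int by simp
    show "integrable mu (\<lambda>z. B n z * V z)" using BV_int[OF V] .
    fix z
    have "B0 n / Cb * ca * h z \<le> B n z * (ca * h z)"
      using B_low[of n z] h_nonneg[of z] ca_pos
      by (metis mult.assoc mult_right_mono mult_nonneg_nonneg less_imp_le)
    also have "\<dots> \<le> B n z * V z" using V B_pos[of n z] unfolding pred_def by simp
    finally show "B0 n / Cb * ca * h z \<le> B n z * V z" .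
  qed
  then show ?thesis using h_one by simp
qed

lemma Z_pos: "pred V \<Longrightarrow> 0 < (\<integral>z. B n z * V z \<partial>mu)"
  using Z_low[of V n] B0_pos[of n] Cb_pos ca_pos
  by (smt (verit) divide_pos_pos mult_pos_pos)

lemma good_Psi: "pred V \<Longrightarrow> good (Psi n V)"
proof -
  assume V: "pred V"
  define Z where "Z = (\<integral>z. B n z * V z \<partial>mu)"
  have Z: "0 < Z" unfolding Z_def by (rule Z_pos[OF V])
  have m[measurable]: "V \<in> borel_measurable mu" using V pred_def by simp
  have P: "Psi n V = (\<lambda>x. B n x * V x / Z)" unfolding Psi_def Z_def by auto
  have "integrable mu (\<lambda>x. B n x * V x / Z)" using BV_int[OF V] by simp
  moreover have "(\<integral>x. B n x * V x / Z \<partial>mu) = 1" using Z unfolding Z_def by simp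
  moreover have "0 \<le> B n x * V x / Z" for x
    using Z B_pos[of n x] pred_nonneg[OF V, of x] by simp
  ultimately show ?thesis unfolding good_def P by auto
qed

lemma pred_meas: "pred V \<Longrightarrow> V \<in> borel_measurable mu" using pred_def by simp

lemma Bdiff_int: "pred V \<Longrightarrow> pred U \<Longrightarrow> integrable mu (\<lambda>x. B n x * \<bar>V x - U x\<bar>)"
proof -
  assume V: "pred V" and U: "pred U"
  note [measurable] = pred_meas[OF V] pred_meas[OF U]
  show ?thesis
  proof (rule Bochner_Integration.integrable_bound[where f="\<lambda>x. (Cb * B0 n) * \<bar>V x - U x\<bar>"])
    show "integrable mu (\<lambda>x. (Cb * B0 n) * \<bar>V x - U x\<bar>)" using pred_int[OF V] pred_int[OF U] by simp
    show "(\<lambda>x. B n x * \<bar>V x - U x\<bar>) \<in> borel_measurable mu" by measurable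
    show "AE x in mu. norm (B n x * \<bar>V x - U x\<bar>) \<le> norm (Cb * B0 n * \<bar>V x - U x\<bar>)"
      using B_up[of n] Cb_pos B0_pos[of n] abs_of_pos[OF B_pos[of n]]
      by (intro AE_I2) (simp add: abs_mult mult_right_mono)
  qed
qed

lemma abs_int_le:
  fixes f g :: "_ \<Rightarrow> real"
  assumes "integrable M f" "integrable M g" "\<And>x. x \<in> space M \<Longrightarrow> \<bar>f x\<bar> \<le> g x"
  shows "\<bar>\<integral>x. f x \<partial>M\<bar> \<le> (\<integral>x. g x \<partial>M)"
proof -
  have "\<bar>\<integral>x. f x \<partial>M\<bar> \<le> (\<integral>x. \<bar>f x\<bar> \<partial>M)" by (rule integral_abs_bound)
  also have "\<dots> \<le> (\<integral>x. g x \<partial>M)" using assms by (intro integral_mono) auto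
  finally show ?thesis .
qed

lemma Psi_lip: "pred V \<Longrightarrow> pred U \<Longrightarrow> d1 (Psi n V) (Psi n U) \<le> 2 * Cb^2 / ca * d1 V U"
proof -
  assume V: "pred V" and U: "pred U"
  note [measurable] = pred_meas[OF V] pred_meas[OF U]
  define Zv where "Zv = (\<integral>z. B n z * V z \<partial>mu)"
  define Zu where "Zu = (\<integral>z. B n z * U z \<partial>mu)"
  have Zv: "0 < Zv" unfolding Zv_def by (rule Z_pos[OF V])
  have Zu: "0 < Zu" unfolding Zu_def by (rule Z_pos[OF U])
  define E where "E = (\<integral>x. B n x * \<bar>V x - U x\<bar> \<partial>mu)"
  have iE: "integrable mu (\<lambda>x. B n x * \<bar>V x - U x\<bar>)" by (rule Bdiff_int[OF V U])
  have iV: "integrable mu (\<lambda>x. B n x * V x)" by (rule BV_int[OF V])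
  have iU: "integrable mu (\<lambda>x. B n x * U x)" by (rule BV_int[OF U])
  have pt: "\<bar>Psi n V x - Psi n U x\<bar> \<le> B n x * \<bar>V x - U x\<bar> / Zv + B n x * U x * (\<bar>Zu - Zv\<bar> / (Zv * Zu))" for x
  proof -
    have eq: "Psi n V x - Psi n U x = B n x * (V x - U x) / Zv + B n x * U x * ((Zu - Zv) / (Zv * Zu))"
      unfolding Psi_def Zv_def[symmetric] Zu_def[symmetric] using Zv Zu
      by (simp add: field_simps)
    have "\<bar>Psi n V x - Psi n U x\<bar> \<le> \<bar>B n x * (V x - U x) / Zv\<bar> + \<bar>B n x * U x * ((Zu - Zv) / (Zv * Zu))\<bar>"
      unfolding eq by (rule abs_triangle_ineq)
    also have "\<dots> = B n x * \<bar>V x - U x\<bar> / Zv + B n x * U x * (\<bar>Zu - Zv\<bar> / (Zv * Zu))"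
      using Zv Zu B_pos[of n x] pred_nonneg[OF U, of x] by (simp add: abs_mult)
    finally show ?thesis .
  qed
  have "d1 (Psi n V) (Psi n U) \<le> (\<integral>x. B n x * \<bar>V x - U x\<bar> / Zv + B n x * U x * (\<bar>Zu - Zv\<bar> / (Zv * Zu)) \<partial>mu)"
    unfolding d1_def
  proof (rule integral_mono)
    show "integrable mu (\<lambda>x. \<bar>Psi n V x - Psi n U x\<bar>)"
      using good_Psi[OF V, of n] good_Psi[OF U, of n] unfolding good_def by auto
    show "integrable mu (\<lambda>x. B n x * \<bar>V x - U x\<bar> / Zv + B n x * U x * (\<bar>Zu - Zv\<bar> / (Zv * Zu)))"
      using iE iU by auto
  qed (rule pt)
  also have "\<dots> = E / Zv + Zu * (\<bar>Zu - Zv\<bar> / (Zv * Zu))"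
    using iE iU unfolding E_def Zu_def by simp
  also have "\<dots> = (E + \<bar>Zu - Zv\<bar>) / Zv" using Zu Zv by (simp add: field_simps)
  also have "\<dots> \<le> (2 * E) / Zv"
  proof -
    have bd: "\<And>x. \<bar>B n x * U x - B n x * V x\<bar> = B n x * \<bar>V x - U x\<bar>"
      by (simp add: right_diff_distrib[symmetric] abs_mult abs_of_pos B_pos abs_minus_commute)
    have "Zu - Zv = (\<integral>x. B n x * (U x - V x) \<partial>mu)"
      unfolding Zu_def Zv_def using iU iV by (simp add: algebra_simps)
    also have "\<bar>\<dots>\<bar> \<le> E" unfolding E_def
      apply (rule abs_int_le)
      using iU iV iE bd Bochner_Integration.integrable_diff[OF iU iV] abs_of_pos[OF B_pos[of n]]
      by (auto simp: abs_mult abs_minus_commute right_diff_distrib)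
    finally have "\<bar>Zu - Zv\<bar> \<le> E" .
    then show ?thesis using Zv by (intro divide_right_mono) auto
  qed
  also have "\<dots> \<le> 2 * (Cb * B0 n * d1 V U) / (B0 n / Cb * ca)"
  proof (rule frac_le)
    have "E \<le> (\<integral>x. Cb * B0 n * \<bar>V x - U x\<bar> \<partial>mu)" unfolding E_def
      apply (rule integral_mono[OF iE])
      using pred_int[OF V] pred_int[OF U] apply simp
      using B_up[of n] by (simp add: mult_right_mono)
    then show "2 * E \<le> 2 * (Cb * B0 n * d1 V U)" unfolding d1_def by simp
    show "0 \<le> 2 * (Cb * B0 n * d1 V U)" unfolding d1_def using Cb_pos B0_pos[of n] by simp
    show "0 < B0 n / Cb * ca" using Cb_pos B0_pos[of n] ca_pos by simp
    show "B0 n / Cb * ca \<le> Zv" unfolding Zv_def by (rule Z_low[OF V])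
  qed
  also have "\<dots> = 2 * Cb^2 / ca * d1 V U" using Cb_pos B0_pos[of n] ca_pos
    by (simp add: field_simps power2_eq_square)
  finally show ?thesis .
qed

lemma good_meas: "good p \<Longrightarrow> p \<in> borel_measurable mu" by (simp add: good_def)
lemma good_int: "good p \<Longrightarrow> integrable mu p" by (simp add: good_def)
lemma good_nonneg: "good p \<Longrightarrow> 0 \<le> p x" by (simp add: good_def)
lemma good_one: "good p \<Longrightarrow> (\<integral>x. p x \<partial>mu) = 1" by (simp add: good_def)

lemma a_sec_meas[measurable]: "(\<lambda>x'. a x' x) \<in> borel_measurable mu"
  by (rule a_meas2) (auto simp: space_mu)

lemma intA: "integrable mu f \<Longrightarrow> integrable mu (\<lambda>x'. f x' * a x' x)"
proof -
  assume f: "integrable mu f"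
  then have [measurable]: "f \<in> borel_measurable mu" by auto
  show ?thesis
  proof (rule Bochner_Integration.integrable_bound[where f="\<lambda>x'. (Ca * h x) * \<bar>f x'\<bar>"])
    show "integrable mu (\<lambda>x'. (Ca * h x) * \<bar>f x'\<bar>)" using f by auto
    show "(\<lambda>x'. f x' * a x' x) \<in> borel_measurable mu" by measurable
    show "AE x' in mu. norm (f x' * a x' x) \<le> norm (Ca * h x * \<bar>f x'\<bar>)"
    proof (rule AE_I2)
      fix x'
      have "\<bar>a x' x\<bar> \<le> Ca * h x" using a_bounds[of x x'] a_nonneg[of x' x] by simp
      then have "\<bar>f x'\<bar> * \<bar>a x' x\<bar> \<le> \<bar>f x'\<bar> * (Ca * h x)" by (simp add: mult_left_mono)
      then show "norm (f x' * a x' x) \<le> norm (Ca * h x * \<bar>f x'\<bar>)"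
        using Ca_pos h_nonneg[of x] by (simp add: abs_mult mult.commute)
    qed
  qed
qed

lemma A_meas: "p \<in> borel_measurable mu \<Longrightarrow> A p \<in> borel_measurable mu"
proof -
  assume [measurable]: "p \<in> borel_measurable mu"
  have "(\<lambda>(x, x'). p x' * a x' x) \<in> borel_measurable (mu \<Otimes>\<^sub>M mu)" by measurable
  then have "(\<lambda>x. \<integral>x'. p x' * a x' x \<partial>mu) \<in> borel_measurable mu"
    by (rule mu.borel_measurable_lebesgue_integral)
  then show ?thesis unfolding A_def[abs_def] .
qed

lemma A_mono_h:
  assumes "integrable mu f" "\<And>x. 0 \<le> f x"
  shows "ca * h x * (\<integral>x'. f x' \<partial>mu) \<le> (\<integral>x'. f x' * a x' x \<partial>mu)"
    and "(\<integral>x'. f x' * a x' x \<partial>mu) \<le> Ca * h x * (\<integral>x'. f x' \<partial>mu)"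
proof -
  have "(\<integral>x'. f x' * (ca * h x) \<partial>mu) \<le> (\<integral>x'. f x' * a x' x \<partial>mu)"
    using assms intA[OF assms(1)] a_bounds by (intro integral_mono) (auto intro!: mult_left_mono)
  then show "ca * h x * (\<integral>x'. f x' \<partial>mu) \<le> (\<integral>x'. f x' * a x' x \<partial>mu)" by (simp add: mult.commute)
  have "(\<integral>x'. f x' * a x' x \<partial>mu) \<le> (\<integral>x'. f x' * (Ca * h x) \<partial>mu)"
    using assms intA[OF assms(1)] a_bounds by (intro integral_mono) (auto intro!: mult_left_mono)
  then show "(\<integral>x'. f x' * a x' x \<partial>mu) \<le> Ca * h x * (\<integral>x'. f x' \<partial>mu)" by (simp add: mult.commute)
qed

lemma pred_A: "good p \<Longrightarrow> pred (A p)"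
proof -
  assume p: "good p"
  show ?thesis unfolding pred_def
  proof (intro conjI allI)
    show "A p \<in> borel_measurable mu" by (rule A_meas[OF good_meas[OF p]])
    fix x
    show "ca * h x \<le> A p x" "A p x \<le> Ca * h x"
      using A_mono_h[OF good_int[OF p] good_nonneg[OF p], of x] good_one[OF p]
      unfolding A_def by simp_all
  qed
qed

lemma A_diff: "good p \<Longrightarrow> good q \<Longrightarrow> A p x - A q x = (\<integral>x'. (p x' - q x') * a x' x \<partial>mu)"
  unfolding A_def using intA[OF good_int, of p] intA[OF good_int, of q]
  by (simp add: left_diff_distrib)

lemma A_lip: "good p \<Longrightarrow> good q \<Longrightarrow> d1 (A p) (A q) \<le> Ca * d1 p q"
proof -
  assume p: "good p" and q: "good q"
  have ipq: "integrable mu (\<lambda>x. \<bar>p x - q x\<bar>)" using good_int[OF p] good_int[OF q] by auto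
  have pt: "\<bar>A p x - A q x\<bar> \<le> Ca * h x * d1 p q" for x
  proof -
    have "\<bar>A p x - A q x\<bar> = \<bar>\<integral>x'. (p x' - q x') * a x' x \<partial>mu\<bar>" using A_diff[OF p q] by simp
    also have "\<dots> \<le> (\<integral>x'. \<bar>p x' - q x'\<bar> * a x' x \<partial>mu)"
      apply (rule abs_int_le)
      using intA[of "\<lambda>x'. p x' - q x'" x] intA[OF ipq, of x] good_int[OF p] good_int[OF q]
      by (auto simp: abs_mult a_nonneg)
    also have "\<dots> \<le> Ca * h x * (\<integral>x'. \<bar>p x' - q x'\<bar> \<partial>mu)"
      by (rule A_mono_h(2)[OF ipq]) simp
    finally show ?thesis unfolding d1_def .
  qed
  have "d1 (A p) (A q) \<le> (\<integral>x. Ca * h x * d1 p q \<partial>mu)" unfolding d1_def[of "A p"]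
    apply (rule integral_mono)
    using pred_int[OF pred_A[OF p]] pred_int[OF pred_A[OF q]] h_int pt by auto
  also have "\<dots> = Ca * d1 p q" using h_one by simp
  finally show ?thesis .
qed

definition "L = 2 * Cb^2 / ca * Ca"

lemma L_ge1: "1 \<le> L"
proof -
  have "1 \<le> Cb^2" using Cb_ge1 by (simp add: one_le_power)
  moreover have "1 \<le> Ca / ca" using ca_Ca ca_pos by simp
  ultimately have "1 \<le> Cb^2 * (Ca / ca)" by (metis mult_mono' mult_1 zero_le_one)
  then show ?thesis unfolding L_def by simp
qed

lemma good_Phi: "good p \<Longrightarrow> good (Phi n p)"
  unfolding Phi_def by (rule good_Psi[OF pred_A])

lemma d1_nonneg: "0 \<le> d1 f g" unfolding d1_def by (intro integral_nonneg_AE) auto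

lemma Phi_lip: "good p \<Longrightarrow> good q \<Longrightarrow> d1 (Phi n p) (Phi n q) \<le> L * d1 p q"
proof -
  assume p: "good p" and q: "good q"
  have "d1 (Phi n p) (Phi n q) \<le> 2 * Cb^2 / ca * d1 (A p) (A q)"
    unfolding Phi_def by (rule Psi_lip[OF pred_A[OF p] pred_A[OF q]])
  also have "\<dots> \<le> 2 * Cb^2 / ca * (Ca * d1 p q)"
    using A_lip[OF p q] ca_pos by (intro mult_left_mono) auto
  finally show ?thesis unfolding L_def by (simp add: mult_ac)
qed

lemma good_prp: "good p \<Longrightarrow> good (prp s k p)"
  by (induction k) (auto intro: good_Phi)

lemma prp_lip: "good p \<Longrightarrow> good q \<Longrightarrow> d1 (prp s k p) (prp s k q) \<le> L^k * d1 p q"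
proof (induction k)
  case 0 then show ?case by simp
next
  case (Suc k)
  have "d1 (prp s (Suc k) p) (prp s (Suc k) q) \<le> L * d1 (prp s k p) (prp s k q)"
    using Phi_lip[OF good_prp[OF Suc.prems(1)] good_prp[OF Suc.prems(2)]] by simp
  also have "\<dots> \<le> L * (L^k * d1 p q)" using Suc L_ge1 by (intro mult_left_mono) auto
  finally show ?case by (simp add: mult_ac)
qed

lemma prp_Suc': "prp s (Suc k) p = prp (Suc s) k (Phi s p)"
  by (induction k) auto

definition rat :: "('a \<Rightarrow> real) \<Rightarrow> ('a \<Rightarrow> real) \<Rightarrow> real \<Rightarrow> bool" where "rat P Q r \<longleftrightarrow> (\<exists>m M. 0 < m \<and> M \<le> r * m \<and> (\<forall>x. m * Q x \<le> P x \<and> P x \<le> M * Q x))"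

definition "eps = ca / Ca"
lemma eps_pos: "0 < eps" unfolding eps_def using ca_pos Ca_pos by simp
lemma eps_le1: "eps \<le> 1" unfolding eps_def using ca_Ca Ca_pos by simp

lemma m_le1: "good p \<Longrightarrow> good q \<Longrightarrow> (\<And>x. m * q x \<le> p x) \<Longrightarrow> m \<le> 1"
proof -
  assume p: "good p" and q: "good q" and le: "\<And>x. m * q x \<le> p x"
  have "(\<integral>x. m * q x \<partial>mu) \<le> (\<integral>x. p x \<partial>mu)"
    by (rule integral_mono) (use good_int[OF p] good_int[OF q] le in auto)
  then show ?thesis using good_one[OF p] good_one[OF q] by simp
qed

lemma M_ge1: "good p \<Longrightarrow> good q \<Longrightarrow> (\<And>x. p x \<le> M * q x) \<Longrightarrow> 1 \<le> M"
proof -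
  assume p: "good p" and q: "good q" and le: "\<And>x. p x \<le> M * q x"
  have "(\<integral>x. p x \<partial>mu) \<le> (\<integral>x. M * q x \<partial>mu)"
    by (rule integral_mono) (use good_int[OF p] good_int[OF q] le in auto)
  then show ?thesis using good_one[OF p] good_one[OF q] by simp
qed

lemma A_ratio:
  assumes p: "good p" and q: "good q" and m: "0 < m"
    and le: "\<And>x. m * q x \<le> p x \<and> p x \<le> M * q x"
  shows "(eps + (1 - eps) * m) * A q x \<le> A p x \<and> A p x \<le> (eps + (1 - eps) * M) * A q x"
proof -
  have m1: "m \<le> 1" using m_le1[OF p q] le by blast
  have M1: "1 \<le> M" using M_ge1[OF p q] le by blast
  have Aq: "eps * A q x \<le> ca * h x"
  proof -
    have "A q x \<le> Ca * h x" using pred_A[OF q] unfolding pred_def by simp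
    then have "eps * A q x \<le> eps * (Ca * h x)" using eps_pos by (intro mult_left_mono) auto
    also have "\<dots> = ca * h x" unfolding eps_def using Ca_pos by simp
    finally show ?thesis .
  qed
  have Aq0: "0 \<le> A q x" using pred_nonneg[OF pred_A[OF q]] .
  have i1: "integrable mu (\<lambda>x. p x - m * q x)" using good_int[OF p] good_int[OF q] by auto
  have i2: "integrable mu (\<lambda>x. M * q x - p x)" using good_int[OF p] good_int[OF q] by auto
  have e1: "A p x - m * A q x = (\<integral>x'. (p x' - m * q x') * a x' x \<partial>mu)"
    unfolding A_def using intA[OF good_int[OF p], of x] intA[OF good_int[OF q], of x]
    by (simp add: left_diff_distrib mult.assoc)
  have "ca * h x * (\<integral>x'. (p x' - m * q x') \<partial>mu) \<le> (\<integral>x'. (p x' - m * q x') * a x' x \<partial>mu)"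
    using A_mono_h(1)[OF i1, of x] le by simp
  moreover have "(\<integral>x'. (p x' - m * q x') \<partial>mu) = 1 - m"
    using good_int[OF p] good_int[OF q] good_one[OF p] good_one[OF q] by simp
  ultimately have "ca * h x * (1 - m) \<le> A p x - m * A q x" using e1 by simp
  moreover have "eps * A q x * (1 - m) \<le> ca * h x * (1 - m)" using Aq m1 by (intro mult_right_mono) auto
  ultimately have lo: "(eps + (1 - eps) * m) * A q x \<le> A p x" by (simp add: algebra_simps)
  have e2: "M * A q x - A p x = (\<integral>x'. (M * q x' - p x') * a x' x \<partial>mu)"
    unfolding A_def using intA[OF good_int[OF p], of x] intA[OF good_int[OF q], of x]
    by (simp add: left_diff_distrib mult.assoc)
  have "ca * h x * (\<integral>x'. (M * q x' - p x') \<partial>mu) \<le> (\<integral>x'. (M * q x' - p x') * a x' x \<partial>mu)"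
    using A_mono_h(1)[OF i2, of x] le by simp
  moreover have "(\<integral>x'. (M * q x' - p x') \<partial>mu) = M - 1"
    using good_int[OF p] good_int[OF q] good_one[OF p] good_one[OF q] by simp
  ultimately have "ca * h x * (M - 1) \<le> M * A q x - A p x" using e2 by simp
  moreover have "eps * A q x * (M - 1) \<le> ca * h x * (M - 1)" using Aq M1 by (intro mult_right_mono) auto
  ultimately have hi: "A p x \<le> (eps + (1 - eps) * M) * A q x" by (simp add: algebra_simps)
  show ?thesis using lo hi by simp
qed

lemma Psi_ratio:
  assumes U: "pred U" and V: "pred V" and lo: "0 < lo"
    and le: "\<And>x. lo * U x \<le> V x \<and> V x \<le> hi * U x"
  shows "rat (Psi n V) (Psi n U) (hi / lo)"
proof -
  define Zv where "Zv = (\<integral>z. B n z * V z \<partial>mu)"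
  define Zu where "Zu = (\<integral>z. B n z * U z \<partial>mu)"
  have Zv: "0 < Zv" unfolding Zv_def by (rule Z_pos[OF V])
  have Zu: "0 < Zu" unfolding Zu_def by (rule Z_pos[OF U])
  have PV: "Psi n V x = B n x * V x / Zv" for x unfolding Psi_def Zv_def by simp
  have PU: "Psi n U x = B n x * U x / Zu" for x unfolding Psi_def Zu_def by simp
  show ?thesis unfolding rat_def
  proof (intro exI conjI allI)
    show "0 < lo * Zu / Zv" using lo Zu Zv by simp
    show "hi * Zu / Zv \<le> hi / lo * (lo * Zu / Zv)" using lo by simp
    fix x
    have B: "0 < B n x" by (rule B_pos)
    show "lo * Zu / Zv * Psi n U x \<le> Psi n V x"
      unfolding PV PU using le[of x] B Zu Zv by (simp add: field_simps mult_left_mono)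
    show "Psi n V x \<le> hi * Zu / Zv * Psi n U x"
      unfolding PV PU using le[of x] B Zu Zv by (simp add: field_simps mult_left_mono)
  qed
qed

lemma rat_mono: "rat P Q r \<Longrightarrow> r \<le> r' \<Longrightarrow> rat P Q r'"
proof -
  assume "rat P Q r" "r \<le> r'"
  then obtain m M where m: "0 < m" "M \<le> r * m" "\<forall>x. m * Q x \<le> P x \<and> P x \<le> M * Q x"
    unfolding rat_def by blast
  have "r * m \<le> r' * m" using m(1) \<open>r \<le> r'\<close> by (intro mult_right_mono) auto
  then show ?thesis unfolding rat_def using m by (meson order_trans)
qed

lemma r_ge1: "1 \<le> M \<Longrightarrow> M \<le> r * m \<Longrightarrow> 0 < m \<Longrightarrow> m \<le> (1::real) \<Longrightarrow> 1 \<le> r"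
proof (rule ccontr)
  assume a: "1 \<le> M" "M \<le> r * m" "0 < m" "m \<le> 1" "\<not> 1 \<le> r"
  then have "r * m < 1 * m" by (intro mult_strict_right_mono) auto
  with a show False by simp
qed

lemma Phi_contr:
  assumes p: "good p" and q: "good q" and r: "rat p q r"
  shows "rat (Phi n p) (Phi n q) (1 + (1 - eps) * (r - 1))"
proof -
  obtain m M where m: "0 < m" and Mr: "M \<le> r * m" and le: "\<And>x. m * q x \<le> p x \<and> p x \<le> M * q x"
    using r unfolding rat_def by blast
  have m1: "m \<le> 1" using m_le1[OF p q] le by blast
  have M1: "1 \<le> M" using M_ge1[OF p q] le by blast
  have r1: "1 \<le> r" using r_ge1[OF M1 Mr m m1] .
  define lo where "lo = eps + (1 - eps) * m"
  define hi where "hi = eps + (1 - eps) * M"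
  have lo: "0 < lo" unfolding lo_def using eps_pos eps_le1 m by (smt (verit) mult_nonneg_nonneg)
  have "rat (Psi n (A p)) (Psi n (A q)) (hi / lo)"
    by (rule Psi_ratio[OF pred_A[OF q] pred_A[OF p] lo]) (use A_ratio[OF p q m le] in \<open>simp add: lo_def hi_def\<close>)
  moreover have "hi / lo \<le> 1 + (1 - eps) * (r - 1)"
  proof -
    have "hi \<le> eps + (1 - eps) * (r * m)" unfolding hi_def using Mr eps_le1 by (intro add_left_mono mult_left_mono) auto
    also have "\<dots> \<le> (1 + (1 - eps) * (r - 1)) * lo"
    proof -
      have "(1 + (1 - eps) * (r - 1)) * lo - (eps + (1 - eps) * (r * m)) = (1 - eps) * (r - 1) * eps * (1 - m)"
        unfolding lo_def by (simp add: algebra_simps)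
      also have "\<dots> \<ge> 0" using eps_pos eps_le1 r1 m1 by simp
      finally show ?thesis by simp
    qed
    finally show ?thesis using lo by (simp add: pos_divide_le_eq)
  qed
  ultimately show ?thesis unfolding Phi_def by (rule rat_mono)
qed

lemma Phi_init:
  assumes p: "good p" and q: "good q"
  shows "rat (Phi n p) (Phi n q) (1 / eps^2)"
proof -
  have "rat (Psi n (A p)) (Psi n (A q)) ((1 / eps) / eps)"
  proof (rule Psi_ratio[OF pred_A[OF q] pred_A[OF p] eps_pos])
    fix x
    have a1: "ca * h x \<le> A p x" "A p x \<le> Ca * h x" using pred_A[OF p] unfolding pred_def by auto
    have a2: "ca * h x \<le> A q x" "A q x \<le> Ca * h x" using pred_A[OF q] unfolding pred_def by auto
    have "eps * A q x \<le> eps * (Ca * h x)" using a2 eps_pos by (intro mult_left_mono) auto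
    also have "\<dots> = ca * h x" unfolding eps_def using Ca_pos by simp
    finally have l: "eps * A q x \<le> A p x" using a1 by simp
    have "A p x \<le> Ca * h x" by (rule a1(2))
    also have "\<dots> = (1 / eps) * (ca * h x)" unfolding eps_def using ca_pos Ca_pos by simp
    also have "\<dots> \<le> (1 / eps) * A q x" using a2 eps_pos by (intro mult_left_mono) auto
    finally show "eps * A q x \<le> A p x \<and> A p x \<le> 1 / eps * A q x" using l by simp
  qed
  then show ?thesis unfolding Phi_def by (simp add: power2_eq_square)
qed

lemma rat_d1:
  assumes P: "good P" and Q: "good Q" and r: "rat P Q r"
  shows "d1 P Q \<le> r - 1"
proof -
  obtain m M where m: "0 < m" and Mr: "M \<le> r * m" and le: "\<And>x. m * Q x \<le> P x \<and> P x \<le> M * Q x"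
    using r unfolding rat_def by blast
  have m1: "m \<le> 1" using m_le1[OF P Q] le by blast
  have M1: "1 \<le> M" using M_ge1[OF P Q] le by blast
  have r1: "1 \<le> r" using r_ge1[OF M1 Mr m m1] .
  have pt: "\<bar>P x - Q x\<bar> \<le> (M - m) * Q x" for x
  proof -
    have Q0: "0 \<le> Q x" by (rule good_nonneg[OF Q])
    have a1: "(M - 1) * Q x \<le> (M - m) * Q x" by (rule mult_right_mono) (use m1 Q0 in auto)
    have a2: "(1 - m) * Q x \<le> (M - m) * Q x" by (rule mult_right_mono) (use M1 Q0 in auto)
    have "P x - Q x \<le> M * Q x - Q x" using le[of x] by simp
    also have "\<dots> = (M - 1) * Q x" by (simp add: left_diff_distrib)
    finally have b1: "P x - Q x \<le> (M - m) * Q x" using a1 by simp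
    have "Q x - P x \<le> Q x - m * Q x" using le[of x] by simp
    also have "\<dots> = (1 - m) * Q x" by (simp add: left_diff_distrib)
    finally have b2: "Q x - P x \<le> (M - m) * Q x" using a2 by simp
    show ?thesis using b1 b2 by (simp add: abs_le_iff)
  qed
  have "d1 P Q \<le> (\<integral>x. (M - m) * Q x \<partial>mu)" unfolding d1_def
    using good_int[OF P] good_int[OF Q] pt by (intro integral_mono) auto
  also have "\<dots> = M - m" using good_one[OF Q] by simp
  also have "\<dots> \<le> r - 1"
  proof -
    have "M - m \<le> (r - 1) * m" using Mr by (simp add: algebra_simps)
    also have "\<dots> \<le> r - 1" using r1 m1 by (simp add: mult_left_le)
    finally show ?thesis .
  qed
  finally show ?thesis .
qed

lemma forget_rat:
  assumes p: "good p" and q: "good q"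
  shows "rat (prp s (Suc k) p) (prp s (Suc k) q) (1 + (1 / eps^2 - 1) * (1 - eps)^k)"
proof (induction k)
  case 0 then show ?case using Phi_init[OF p q, of s] by simp
next
  case (Suc k)
  define c where "c = 1 / eps^2 - 1"
  have "rat (prp s (Suc (Suc k)) p) (prp s (Suc (Suc k)) q) (1 + (1 - eps) * ((1 + c * (1 - eps)^k) - 1))"
    using Phi_contr[OF good_prp[OF p] good_prp[OF q] Suc.IH[folded c_def]] by simp
  moreover have "(1 - eps) * ((1 + c * (1 - eps)^k) - 1) = c * (1 - eps)^(Suc k)" by simp
  ultimately show ?case by (simp only: c_def)
qed

lemma forget:
  assumes p: "good p" and q: "good q"
  shows "d1 (prp s (Suc k) p) (prp s (Suc k) q) \<le> (1 / eps^2 - 1) * (1 - eps)^k"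
  using rat_d1[OF good_prp[OF p] good_prp[OF q] forget_rat[OF p q]] by simp

end



context flt begin

interpretation mu: sigma_finite_measure mu by (rule sf)

definition mN :: "nat \<Rightarrow> (nat \<Rightarrow> 'a) \<Rightarrow> 'a \<Rightarrow> real" where
  "mN N c x = (\<Sum>j<N. a (c j) x) / real N"

lemma mN_bounds: "1 \<le> N \<Longrightarrow> ca * h x \<le> mN N c x \<and> mN N c x \<le> Ca * h x"
proof -
  assume N: "1 \<le> N"
  have "(\<Sum>j<N. ca * h x) \<le> (\<Sum>j<N. a (c j) x)" using a_bounds by (intro sum_mono) auto
  moreover have "(\<Sum>j<N. a (c j) x) \<le> (\<Sum>j<N. Ca * h x)" using a_bounds by (intro sum_mono) auto
  ultimately show ?thesis using N unfolding mN_def by (simp add: field_simps)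
qed

lemma mN_meas_x: "mN N c \<in> borel_measurable mu"
  unfolding mN_def[abs_def] by (intro borel_measurable_divide borel_measurable_sum a_meas2) (auto simp: space_mu)

lemma pred_mN: "1 \<le> N \<Longrightarrow> pred (mN N c)"
  unfolding pred_def using mN_bounds mN_meas_x by auto

lemma comp_meas: "j < N \<Longrightarrow> (\<lambda>(c, x). c j) \<in> (PiM {..<N} (\<lambda>_. mu) \<Otimes>\<^sub>M mu) \<rightarrow>\<^sub>M mu"
  using measurable_compose[OF measurable_fst measurable_component_singleton[of j "{..<N}" "\<lambda>_. mu"]]
  by (simp add: case_prod_beta)

lemma mN_meas_pair: "(\<lambda>(c, x). mN N c x) \<in> borel_measurable (PiM {..<N} (\<lambda>_. mu) \<Otimes>\<^sub>M mu)"
proof -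
  have "(\<lambda>y. (\<Sum>j<N. a ((\<lambda>(c, x). c j) y) (snd y)) / real N) \<in> borel_measurable (PiM {..<N} (\<lambda>_. mu) \<Otimes>\<^sub>M mu)"
    by (intro borel_measurable_divide borel_measurable_sum a_meas2 comp_meas measurable_snd) auto
  then show ?thesis unfolding mN_def by (simp add: case_prod_beta)
qed

lemma prob_Dm: "good p \<Longrightarrow> prob_space (density mu (\<lambda>x. ennreal (p x)))"
proof (rule prob_spaceI)
  assume p: "good p"
  have "emeasure (density mu (\<lambda>x. ennreal (p x))) (space (density mu (\<lambda>x. ennreal (p x))))
      = (\<integral>\<^sup>+x. ennreal (p x) \<partial>mu)"
    using emeasure_density[OF _ sets.top, of "\<lambda>x. ennreal (p x)" mu] good_meas[OF p]
    by (simp add: space_mu)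
  also have "\<dots> = ennreal (\<integral>x. p x \<partial>mu)"
    using good_int[OF p] good_nonneg[OF p] by (intro nn_integral_eq_integral) auto
  finally show "emeasure (density mu (\<lambda>x. ennreal (p x))) (space (density mu (\<lambda>x. ennreal (p x)))) = 1"
    using good_one[OF p] by simp
qed

lemma sets_PD: "sets (PiM I (\<lambda>_. density mu f)) = sets (PiM I (\<lambda>_. mu))"
  by (rule sets_PiM_cong) auto

lemma space_PD: "space (PiM I (\<lambda>_. density mu f)) = space (PiM I (\<lambda>_. mu))"
  by (rule sets_eq_imp_space_eq[OF sets_PD])

lemma indep_coords:
  assumes M: "\<And>i. i \<in> I \<Longrightarrow> prob_space (M i)" and I: "I \<noteq> {}"
  shows "prob_space.indep_vars (PiM I M) M (\<lambda>i c. c i) I"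
proof -
  interpret P: prob_space "PiM I M" by (rule prob_space_PiM[OF M])
  have "distr (PiM I M) (PiM I M) (\<lambda>x. \<lambda>i\<in>I. x i) = distr (PiM I M) (PiM I M) (\<lambda>x. x)"
    by (rule distr_cong) (auto simp: space_PiM PiE_def extensional_restrict)
  also have "\<dots> = PiM I M" by (rule distr_id)
  also have "\<dots> = PiM I (\<lambda>i. distr (PiM I M) (M i) (\<lambda>c. c i))"
  proof (rule PiM_cong)
    fix i assume i: "i \<in> I"
    show "M i = distr (PiM I M) (M i) (\<lambda>c. c i)"
      using distr_PiM_component[of I M i, OF M i] by simp
  qed simp
  finally show ?thesis
    by (subst P.indep_vars_iff_distr_eq_PiM'[OF I]) auto
qed

lemma expect_coord:
  assumes p: "good p" and j: "j < N"
  shows "prob_space.expectation (PiM {..<N} (\<lambda>_. density mu (\<lambda>x. ennreal (p x)))) (\<lambda>c. a (c j) z) = A p z"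
proof -
  let ?D = "density mu (\<lambda>x. ennreal (p x))"
  let ?P = "PiM {..<N} (\<lambda>_. ?D)"
  have pm[measurable]: "p \<in> borel_measurable mu" by (rule good_meas[OF p])
  have am: "(\<lambda>x'. a x' z) \<in> borel_measurable ?D" by (simp add: measurable_cong_sets[OF sets_density refl])
  have "(\<integral>c. a (c j) z \<partial>?P) = integral\<^sup>L (distr ?P ?D (\<lambda>c. c j)) (\<lambda>x'. a x' z)"
    using j am by (intro integral_distr[symmetric]) auto
  also have "distr ?P ?D (\<lambda>c. c j) = ?D"
    using j prob_Dm[OF p] by (intro distr_PiM_component) auto
  also have "integral\<^sup>L ?D (\<lambda>x'. a x' z) = (\<integral>x'. p x' * a x' z \<partial>mu)"
    using integral_density[of "\<lambda>x'. a x' z" mu p] good_nonneg[OF p] by simp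
  finally show ?thesis unfolding A_def by simp
qed

lemma hoeff_z:
  assumes p: "good p" and N: "1 \<le> N" and d: "0 < d"
  shows "measure (PiM {..<N} (\<lambda>_. density mu (\<lambda>x. ennreal (p x))))
     {c \<in> space (PiM {..<N} (\<lambda>_. density mu (\<lambda>x. ennreal (p x)))). d * h z / 2 < \<bar>mN N c z - A p z\<bar>}
     \<le> 2 * exp (- real N * d^2 / (2 * Ca^2))"
proof (cases "h z = 0")
  case True
  have "mN N c z = 0" for c using mN_bounds[OF N, of z c] True by simp
  moreover have "A p z = 0" using pred_A[OF p] True unfolding pred_def by (metis mult_zero_right order_antisym)
  ultimately show ?thesis using True by simp
next
  case False
  then have hz: "0 < h z" using h_nonneg[of z] by simp
  let ?D = "density mu (\<lambda>x. ennreal (p x))"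
  let ?P = "PiM {..<N} (\<lambda>_. ?D)"
  define X :: "nat \<Rightarrow> (nat \<Rightarrow> 'a) \<Rightarrow> real" where "X = (\<lambda>j c. a (c j) z)"
  interpret P: prob_space ?P by (rule prob_space_PiM) (use prob_Dm[OF p] in auto)
  have "0 \<in> {..<N}" using N by simp
  then have N0: "{..<N} \<noteq> {}" by blast
  have ind0: "P.indep_vars (\<lambda>_. ?D) (\<lambda>i c. c i) {..<N}"
    by (rule indep_coords) (use prob_Dm[OF p] N0 in auto)
  have ind: "P.indep_vars (\<lambda>_. borel) X {..<N}"
    unfolding X_def
    by (rule P.indep_vars_compose2[OF ind0, of "\<lambda>_ x'. a x' z"])
       (simp add: measurable_cong_sets[OF sets_density refl])
  define mu0 where "mu0 = (\<Sum>j<N. P.expectation (X j))"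
  interpret H: Hoeffding_ineq ?P "{..<N}" X "\<lambda>_. 0" "\<lambda>_. Ca * h z" mu0
  proof unfold_locales
    show "finite {..<N}" by simp
    show "P.indep_vars (\<lambda>_. borel) X {..<N}" by (rule ind)
    fix i assume "i \<in> {..<N}"
    show "AE x in ?P. X i x \<in> {0..Ca * h z}"
      using a_bounds a_nonneg unfolding X_def by (intro AE_I2) auto
  qed (simp add: mu0_def)
  have mu0: "mu0 = real N * A p z"
  proof -
    have "(\<Sum>j<N. P.expectation (X j)) = (\<Sum>j<N. A p z)"
      unfolding X_def using expect_coord[OF p, of _ N z] by (intro sum.cong) auto
    then show ?thesis unfolding mu0_def by simp
  qed
  define e where "e = real N * d * h z / 2"
  have e0: "0 \<le> e" unfolding e_def using d hz by simp
  have pos: "(\<Sum>i<N. (Ca * h z - 0)^2) > 0" using N Ca_pos hz by simp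
  have hb: "P.prob {c \<in> space ?P. e \<le> \<bar>(\<Sum>i<N. X i c) - mu0\<bar>} \<le> 2 * exp (-2 * e^2 / (\<Sum>i<N. (Ca * h z - 0)^2))"
    by (rule H.Hoeffding_ineq_abs_ge[OF e0 pos])
  have sub: "{c \<in> space ?P. d * h z / 2 < \<bar>mN N c z - A p z\<bar>} \<subseteq> {c \<in> space ?P. e \<le> \<bar>(\<Sum>i<N. X i c) - mu0\<bar>}"
  proof safe
    fix c assume "d * h z / 2 < \<bar>mN N c z - A p z\<bar>"
    moreover have "mN N c z - A p z = ((\<Sum>i<N. X i c) - mu0) / real N"
      unfolding mN_def X_def mu0 using N by (simp add: field_simps)
    ultimately have "d * h z / 2 < \<bar>(\<Sum>i<N. X i c) - mu0\<bar> / real N" by (simp add: abs_divide)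
    then show "e \<le> \<bar>(\<Sum>i<N. X i c) - mu0\<bar>" unfolding e_def using N by (simp add: field_simps)
  qed
  have meas: "{c \<in> space ?P. e \<le> \<bar>(\<Sum>i<N. X i c) - mu0\<bar>} \<in> P.events"
  proof -
    have "(\<lambda>c. (\<Sum>i<N. X i c)) \<in> borel_measurable ?P"
      using H.random_variable by (intro borel_measurable_sum) auto
    then show ?thesis by measurable
  qed
  have "P.prob {c \<in> space ?P. d * h z / 2 < \<bar>mN N c z - A p z\<bar>} \<le> P.prob {c \<in> space ?P. e \<le> \<bar>(\<Sum>i<N. X i c) - mu0\<bar>}"
    by (rule P.finite_measure_mono[OF sub meas])
  also have "\<dots> \<le> 2 * exp (-2 * e^2 / (\<Sum>i<N. (Ca * h z - 0)^2))" by (rule hb)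
  also have "-2 * e^2 / (\<Sum>i<N. (Ca * h z - 0)^2) = - real N * d^2 / (2 * Ca^2)"
    unfolding e_def using N hz Ca_pos by (simp add: field_simps power2_eq_square)
  finally show ?thesis .
qed

lemma conc:
  assumes p: "good p" and N: "1 \<le> N" and d: "0 < d"
  shows "measure (PiM {..<N} (\<lambda>_. density mu (\<lambda>x. ennreal (p x))))
     {c \<in> space (PiM {..<N} (\<lambda>_. density mu (\<lambda>x. ennreal (p x)))). d < d1 (mN N c) (A p)}
     \<le> 4 * Ca / d * exp (- real N * d^2 / (2 * Ca^2))"
proof -
  let ?D = "density mu (\<lambda>x. ennreal (p x))"
  let ?P = "PiM {..<N} (\<lambda>_. ?D)"
  let ?S = "PiM {..<N} (\<lambda>_. mu)"
  define g where "g = 2 * exp (- real N * d^2 / (2 * Ca^2))"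
  have g0: "0 \<le> g" unfolding g_def by simp
  interpret P: prob_space ?P by (rule prob_space_PiM) (use prob_Dm[OF p] in auto)
  interpret PM: pair_sigma_finite ?P mu
    by (intro pair_sigma_finite.intro sf) (rule P.sigma_finite_measure_axioms)
  have setsP: "sets ?P = sets ?S" by (rule sets_PD)
  have spaceP: "space ?P = space ?S" by (rule space_PD)
  have setsPM: "sets (?P \<Otimes>\<^sub>M mu) = sets (?S \<Otimes>\<^sub>M mu)"
    by (rule sets_pair_measure_cong[OF setsP refl])
  note [measurable] = good_meas[OF p]
  have Am[measurable]: "A p \<in> borel_measurable mu" by (rule A_meas) simp
  have mNm: "(\<lambda>x. mN N (fst x) (snd x)) \<in> borel_measurable (?S \<Otimes>\<^sub>M mu)"
    using mN_meas_pair by (simp add: case_prod_beta)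
  define D where "D = {x \<in> space (?S \<Otimes>\<^sub>M mu). d * h (snd x) / 2 < \<bar>mN N (fst x) (snd x) - A p (snd x)\<bar>}"
  have Dm: "D \<in> sets (?S \<Otimes>\<^sub>M mu)"
    unfolding D_def using mNm by measurable
  have DmP: "D \<in> sets (?P \<Otimes>\<^sub>M mu)" using Dm setsPM by simp
  define Y where "Y = (\<lambda>c. \<integral>\<^sup>+z. ennreal (h z * indicator D (c, z)) \<partial>mu)"
  have fm: "(\<lambda>(c, z). ennreal (h z * indicator D (c, z))) \<in> borel_measurable (?P \<Otimes>\<^sub>M mu)"
  proof -
    have eq: "(\<lambda>(c, z). ennreal (h z * indicator D (c, z))) = (\<lambda>x. ennreal (h (snd x) * indicator D x))"
      by (auto simp: fun_eq_iff)
    show ?thesis unfolding eq using DmP by measurable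
  qed
  have Ym: "Y \<in> borel_measurable ?P"
    unfolding Y_def using fm by (rule mu.borel_measurable_nn_integral)
  have sec: "{c \<in> space ?P. d * h z / 2 < \<bar>mN N c z - A p z\<bar>} \<in> sets ?P" for z
  proof -
    have "(\<lambda>c. (\<lambda>(c, x). mN N c x) (c, z)) \<in> borel_measurable ?S"
      by (rule measurable_Pair1[OF mN_meas_pair]) (simp add: space_mu)
    then have "(\<lambda>c. mN N c z) \<in> borel_measurable ?S" by simp
    then have "(\<lambda>c. mN N c z) \<in> borel_measurable ?P" by (simp only: measurable_cong_sets[OF setsP refl])
    then show ?thesis by measurable
  qed
  have inner: "(\<integral>\<^sup>+c. ennreal (h z * indicator D (c, z)) \<partial>?P) \<le> ennreal (h z) * ennreal g" for z
  proof -
    let ?Sz = "{c \<in> space ?P. d * h z / 2 < \<bar>mN N c z - A p z\<bar>}"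
    have "(\<integral>\<^sup>+c. ennreal (h z * indicator D (c, z)) \<partial>?P) = (\<integral>\<^sup>+c. ennreal (h z) * indicator ?Sz c \<partial>?P)"
      by (rule nn_integral_cong) (auto simp: D_def indicator_def space_pair_measure spaceP space_mu)
    also have "\<dots> = ennreal (h z) * emeasure ?P ?Sz"
      using sec[of z] by (simp add: nn_integral_cmult_indicator)
    also have "\<dots> \<le> ennreal (h z) * ennreal g"
    proof (rule mult_left_mono)
      have "emeasure ?P ?Sz = ennreal (measure ?P ?Sz)" by (simp add: P.emeasure_eq_measure)
      also have "\<dots> \<le> ennreal g" unfolding g_def using hoeff_z[OF p N d, of z] by (intro ennreal_leI) simp
      finally show "emeasure ?P ?Sz \<le> ennreal g" .
    qed simp
    finally show ?thesis .
  qed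
  have intY: "(\<integral>\<^sup>+c. Y c \<partial>?P) \<le> ennreal g"
  proof -
    have "(\<integral>\<^sup>+c. Y c \<partial>?P) = (\<integral>\<^sup>+z. (\<integral>\<^sup>+c. ennreal (h z * indicator D (c, z)) \<partial>?P) \<partial>mu)"
      unfolding Y_def using PM.Fubini'[OF fm] by simp
    also have "\<dots> \<le> (\<integral>\<^sup>+z. ennreal g * ennreal (h z) \<partial>mu)"
      using inner by (intro nn_integral_mono) (simp add: mult.commute)
    also have "\<dots> = ennreal g * (\<integral>\<^sup>+z. ennreal (h z) \<partial>mu)" by (rule nn_integral_cmult) simp
    also have "(\<integral>\<^sup>+z. ennreal (h z) \<partial>mu) = ennreal (\<integral>z. h z \<partial>mu)"
      using h_int h_nonneg by (intro nn_integral_eq_integral) auto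
    finally show ?thesis using h_one by simp
  qed
  have pw: "1 \<le> ennreal (2 * Ca / d) * Y c" if c: "c \<in> space ?P" and big: "d < d1 (mN N c) (A p)" for c
  proof -
    have Dc: "(\<lambda>z. indicator D (c, z) :: real) \<in> borel_measurable mu"
      using measurable_Pair2[OF borel_measurable_indicator[OF Dm], of c] c spaceP by simp
    have iI: "integrable mu (\<lambda>z. h z * indicator D (c, z))"
    proof (rule Bochner_Integration.integrable_bound[OF h_int])
      show "(\<lambda>z. h z * indicator D (c, z)) \<in> borel_measurable mu" using Dc by simp
      show "AE z in mu. norm (h z * indicator D (c, z)) \<le> norm (h z)"
        using h_nonneg by (intro AE_I2) (auto simp: indicator_def)
    qed
    define I where "I = (\<integral>z. h z * indicator D (c, z) \<partial>mu)"
    have YI: "Y c = ennreal I"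
      unfolding Y_def I_def using iI h_nonneg by (intro nn_integral_eq_integral) auto
    have ptw: "\<bar>mN N c z - A p z\<bar> \<le> d / 2 * h z + Ca * (h z * indicator D (c, z))" for z
    proof (cases "(c, z) \<in> D")
      case True
      have "\<bar>mN N c z - A p z\<bar> \<le> Ca * h z"
        using mN_bounds[OF N, of z c] pred_A[OF p] h_nonneg[of z] ca_pos unfolding pred_def
        by (smt (verit) mult_nonneg_nonneg)
      moreover have "0 \<le> d * h z / 2" using h_nonneg[of z] d by simp
      ultimately show ?thesis using True by simp
    next
      case False
      then have "\<not> d * h z / 2 < \<bar>mN N c z - A p z\<bar>"
        unfolding D_def using c spaceP by (simp add: space_pair_measure space_mu)
      then show ?thesis using False by simp
    qed
    have "d1 (mN N c) (A p) \<le> (\<integral>z. d / 2 * h z + Ca * (h z * indicator D (c, z)) \<partial>mu)"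
      unfolding d1_def
    proof (rule integral_mono)
      show "integrable mu (\<lambda>z. \<bar>mN N c z - A p z\<bar>)"
        using pred_int[OF pred_mN[OF N]] pred_int[OF pred_A[OF p]] by auto
      show "integrable mu (\<lambda>z. d / 2 * h z + Ca * (h z * indicator D (c, z)))"
        using h_int iI by auto
    qed (rule ptw)
    also have "\<dots> = d / 2 + Ca * I" unfolding I_def using h_int iI h_one by simp
    finally have "d < d / 2 + Ca * I" using big by simp
    then have "1 < 2 * Ca / d * I" using d Ca_pos by (simp add: field_simps)
    then have "ennreal 1 \<le> ennreal (2 * Ca / d * I)" by (intro ennreal_leI) simp
    moreover have I0: "0 \<le> I" unfolding I_def using h_nonneg by (intro integral_nonneg_AE) auto
    then have "ennreal (2 * Ca / d) * ennreal I = ennreal (2 * Ca / d * I)"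
      using d Ca_pos by (intro ennreal_mult[symmetric]) auto
    ultimately show ?thesis unfolding YI by simp
  qed
  let ?B = "{c \<in> space ?P. 1 \<le> ennreal (2 * Ca / d) * Y c}"
  have Bm: "?B \<in> sets ?P" using Ym by measurable
  have "measure ?P {c \<in> space ?P. d < d1 (mN N c) (A p)} \<le> measure ?P ?B"
    by (rule P.finite_measure_mono[OF _ Bm]) (use pw in auto)
  moreover have "emeasure ?P ?B \<le> ennreal (2 * Ca / d * g)"
  proof -
    have "emeasure ?P ?B \<le> ennreal (2 * Ca / d) * (\<integral>\<^sup>+c. Y c * indicator (space ?P) c \<partial>?P)"
      using nn_integral_Markov_inequality[of Y "space ?P" ?P "ennreal (2 * Ca / d)"] Ym by simp
    also have "(\<integral>\<^sup>+c. Y c * indicator (space ?P) c \<partial>?P) = (\<integral>\<^sup>+c. Y c \<partial>?P)"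
      by (rule nn_integral_cong) auto
    also have "ennreal (2 * Ca / d) * \<dots> \<le> ennreal (2 * Ca / d) * ennreal g"
      by (rule mult_left_mono[OF intY]) simp
    also have "ennreal (2 * Ca / d) * ennreal g = ennreal (2 * Ca / d * g)"
      using d Ca_pos g0 by (intro ennreal_mult[symmetric]) auto
    finally show ?thesis .
  qed
  then have "measure ?P ?B \<le> 2 * Ca / d * g"
    using d Ca_pos g0 by (simp add: P.emeasure_eq_measure)
  ultimately show ?thesis unfolding g_def by simp
qed

end



context flt begin

interpretation mu: sigma_finite_measure mu by (rule sf)

lemma Psi_meas_pair:
  assumes V: "(\<lambda>(c, x). V c x) \<in> borel_measurable (M \<Otimes>\<^sub>M mu)"
  shows "(\<lambda>(c, x). Psi n (V c) x) \<in> borel_measurable (M \<Otimes>\<^sub>M mu)"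
proof -
  have V': "(\<lambda>y. V (fst y) (snd y)) \<in> borel_measurable (M \<Otimes>\<^sub>M mu)" using V by (simp add: case_prod_beta)
  have "(\<lambda>(c, z). B n z * V c z) \<in> borel_measurable (M \<Otimes>\<^sub>M mu)"
    using V' by (simp add: case_prod_beta) measurable
  then have Z: "(\<lambda>c. \<integral>z. B n z * V c z \<partial>mu) \<in> borel_measurable M"
    by (rule mu.borel_measurable_lebesgue_integral)
  have "(\<lambda>y. B n (snd y) * V (fst y) (snd y) / (\<lambda>c. \<integral>z. B n z * V c z \<partial>mu) (fst y)) \<in> borel_measurable (M \<Otimes>\<^sub>M mu)"
    using V' Z by measurable
  then show ?thesis unfolding Psi_def by (simp add: case_prod_beta)
qed

lemma A_meas_pair:
  assumes p: "(\<lambda>(c, x). p c x) \<in> borel_measurable (M \<Otimes>\<^sub>M mu)"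
  shows "(\<lambda>(c, x). A (p c) x) \<in> borel_measurable (M \<Otimes>\<^sub>M mu)"
proof -
  have p': "(\<lambda>y. p (fst y) (snd y)) \<in> borel_measurable (M \<Otimes>\<^sub>M mu)" using p by (simp add: case_prod_beta)
  have "(\<lambda>(y, x'). p (fst y) x' * a x' (snd y)) \<in> borel_measurable ((M \<Otimes>\<^sub>M mu) \<Otimes>\<^sub>M mu)"
  proof -
    have "(\<lambda>w. p (fst (fst w)) (snd w) * a (snd w) (snd (fst w))) \<in> borel_measurable ((M \<Otimes>\<^sub>M mu) \<Otimes>\<^sub>M mu)"
    proof (intro borel_measurable_times a_meas2)
      show "(\<lambda>w. p (fst (fst w)) (snd w)) \<in> borel_measurable ((M \<Otimes>\<^sub>M mu) \<Otimes>\<^sub>M mu)"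
      proof -
        have "(\<lambda>w. (fst (fst w), snd w)) \<in> (M \<Otimes>\<^sub>M mu) \<Otimes>\<^sub>M mu \<rightarrow>\<^sub>M M \<Otimes>\<^sub>M mu" by measurable
        from measurable_compose[OF this p'] show ?thesis by simp
      qed
    qed auto
    then show ?thesis by (simp add: case_prod_beta)
  qed
  then have "(\<lambda>y. \<integral>x'. p (fst y) x' * a x' (snd y) \<partial>mu) \<in> borel_measurable (M \<Otimes>\<^sub>M mu)"
    by (rule mu.borel_measurable_lebesgue_integral)
  then show ?thesis unfolding A_def by (simp add: case_prod_beta)
qed

lemma Phi_meas_pair:
  "(\<lambda>(c, x). p c x) \<in> borel_measurable (M \<Otimes>\<^sub>M mu) \<Longrightarrow> (\<lambda>(c, x). Phi n (p c) x) \<in> borel_measurable (M \<Otimes>\<^sub>M mu)"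
  unfolding Phi_def by (intro Psi_meas_pair A_meas_pair)

lemma prp_meas_pair:
  "(\<lambda>(c, x). p c x) \<in> borel_measurable (M \<Otimes>\<^sub>M mu) \<Longrightarrow> (\<lambda>(c, x). prp s k (p c) x) \<in> borel_measurable (M \<Otimes>\<^sub>M mu)"
proof (induction k)
  case 0 then show ?case by simp
next
  case (Suc k)
  have "(\<lambda>(c, x). Phi (s + k) (prp s k (p c)) x) \<in> borel_measurable (M \<Otimes>\<^sub>M mu)"
    by (rule Phi_meas_pair[where p="\<lambda>c. prp s k (p c)"]) (use Suc in simp)
  then show ?case by simp
qed

lemma d1_meas_pair:
  assumes "(\<lambda>(c, x). p c x) \<in> borel_measurable (M \<Otimes>\<^sub>M mu)" "q \<in> borel_measurable mu"
  shows "(\<lambda>c. d1 (p c) q) \<in> borel_measurable M"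
proof -
  have "(\<lambda>(c, x). \<bar>p c x - q x\<bar>) \<in> borel_measurable (M \<Otimes>\<^sub>M mu)"
  proof -
    have "(\<lambda>y. \<bar>p (fst y) (snd y) - q (snd y)\<bar>) \<in> borel_measurable (M \<Otimes>\<^sub>M mu)"
      using assms by (simp add: case_prod_beta) measurable
    then show ?thesis by (simp add: case_prod_beta)
  qed
  then show ?thesis unfolding d1_def by (rule mu.borel_measurable_lebesgue_integral)
qed

end


lemma step_bind:
  fixes W W' :: "'c \<Rightarrow> real" and x \<eta> \<beta> :: real
  assumes M: "prob_space M" and sM: "sets M = sets S"
    and K: "K \<in> S \<rightarrow>\<^sub>M prob_algebra S"
    and W: "W \<in> borel_measurable S" and W': "W' \<in> borel_measurable S"
    and b0: "0 \<le> \<beta>"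
    and bound: "\<And>c. c \<in> space S \<Longrightarrow> W c \<le> x \<Longrightarrow> measure (K c) {c' \<in> space S. x + \<eta> < W' c'} \<le> \<beta>"
  shows "measure (M \<bind> K) {c' \<in> space S. x + \<eta> < W' c'} \<le> measure M {c \<in> space S. x < W c} + \<beta>"
proof -
  interpret M: prob_space M by (rule M)
  have spM: "space M = space S" using sM by (rule sets_eq_imp_space_eq)
  have KM: "K \<in> M \<rightarrow>\<^sub>M prob_algebra S" using K by (simp only: measurable_cong_sets[OF sM refl])
  have Km: "K \<in> M \<rightarrow>\<^sub>M subprob_algebra S" using measurable_prob_algebraD[OF KM] .
  have Kp: "prob_space (K c)" if "c \<in> space M" for c
    using measurable_space[OF KM that] by (simp add: space_prob_algebra)
  have sK: "sets (K c) = sets S" if "c \<in> space M" for c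
    using measurable_space[OF KM that] by (simp add: space_prob_algebra)
  define E where "E = {c' \<in> space S. x + \<eta> < W' c'}"
  define F where "F = {c \<in> space S. x < W c}"
  have Em: "E \<in> sets S" unfolding E_def using W' by measurable
  have Fm: "F \<in> sets M" unfolding F_def using W sM by measurable
  interpret MK: prob_space "M \<bind> K" by (rule M.prob_space_bind[OF _ Km]) (simp add: Kp)
  have "emeasure (M \<bind> K) E = (\<integral>\<^sup>+c. emeasure (K c) E \<partial>M)"
    by (rule emeasure_bind[OF M.not_empty Km Em])
  also have "\<dots> \<le> (\<integral>\<^sup>+c. (indicator F c + ennreal \<beta>) \<partial>M)"
  proof (rule nn_integral_mono)
    fix c assume c: "c \<in> space M"
    interpret Kc: prob_space "K c" by (rule Kp[OF c])
    show "emeasure (K c) E \<le> indicator F c + ennreal \<beta>"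
    proof (cases "x < W c")
      case True
      then have "indicator F c = (1::ennreal)" unfolding F_def using c spM by simp
      moreover have "emeasure (K c) E \<le> 1" by (rule Kc.emeasure_le_1)
      ultimately show ?thesis by (simp add: add_increasing2)
    next
      case False
      have "emeasure (K c) E = ennreal (measure (K c) E)" by (rule Kc.emeasure_eq_measure)
      also have "\<dots> \<le> ennreal \<beta>" using bound[of c] c spM False unfolding E_def by (intro ennreal_leI) auto
      finally show ?thesis by (simp add: add_increasing)
    qed
  qed
  also have "\<dots> = emeasure M F + ennreal \<beta>"
    using Fm by (simp add: nn_integral_add M.emeasure_space_1)
  finally have "emeasure (M \<bind> K) E \<le> emeasure M F + ennreal \<beta>" .
  also have "emeasure M F + ennreal \<beta> = ennreal (measure M F + \<beta>)"
    using b0 by (simp add: M.emeasure_eq_measure ennreal_plus)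
  finally have "ennreal (measure (M \<bind> K) E) \<le> ennreal (measure M F + \<beta>)"
    by (simp add: MK.emeasure_eq_measure)
  then have "measure (M \<bind> K) E \<le> measure M F + \<beta>"
    using b0 by (subst (asm) ennreal_le_iff) auto
  then show ?thesis unfolding E_def F_def .
qed

locale flt2 = flt mu a h ca Ca "\<lambda>n x. b (Suc n) x (y (Suc n))" Cb
  for mu :: "'a measure" and a h ca Ca and b :: "nat \<Rightarrow> 'a \<Rightarrow> 'b \<Rightarrow> real" and y :: "nat \<Rightarrow> 'b" and Cb +
  fixes a0 :: "'a \<Rightarrow> real"
  assumes a0_good: "good a0"
begin

interpretation mu: sigma_finite_measure mu by (rule sf)

abbreviation "G N j c \<equiv> mc_filter mu a0 a b y N (Suc j) c"
abbreviation "opt n \<equiv> opt_filter mu a0 a b y n"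
abbreviation "Mc N j \<equiv> mc_particles mu a0 a b y N j"
abbreviation "S N \<equiv> PiM {..<N} (\<lambda>_. mu)"

lemma G_eq: "G N j c = Psi j (mN N c)"
  unfolding mc_filter_def Psi_def mN_def by (simp add: Let_def fun_eq_iff)

lemma opt_Suc: "opt (Suc n) = Phi n (opt n)"
  unfolding Phi_def Psi_def A_def by (simp add: Let_def fun_eq_iff)

lemma good_opt: "good (opt n)"
proof (induction n)
  case 0 then show ?case using a0_good by simp
next
  case (Suc n) then show ?case unfolding opt_Suc by (rule good_Phi)
qed

lemma opt_prp: "opt (s + k) = prp s k (opt s)"
proof (induction k)
  case 0 then show ?case by simp
next
  case (Suc k)
  have "opt (s + Suc k) = Phi (s + k) (opt (s + k))" using opt_Suc[of "s + k"] by simp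
  then show ?case using Suc by simp
qed

lemma good_G: "1 \<le> N \<Longrightarrow> good (G N j c)"
  unfolding G_eq by (rule good_Psi[OF pred_mN])

lemma G_meas_pair: "(\<lambda>(c, x). G N j c x) \<in> borel_measurable (S N \<Otimes>\<^sub>M mu)"
  unfolding G_eq by (rule Psi_meas_pair[where V="mN N"]) (rule mN_meas_pair)

definition "K N j c = PiM {..<N} (\<lambda>_. density mu (\<lambda>x. ennreal (G N j c x)))"

lemma K_prob: "prob_space (K N j c)"
  unfolding K_def by (rule prob_space_PiM) (rule prob_Dm[OF good_G], auto)

lemma sets_K: "sets (K N j c) = sets (S N)"
  unfolding K_def by (rule sets_PD)

lemma K_meas: "K N j \<in> S N \<rightarrow>\<^sub>M prob_algebra (S N)"
proof (rule measurable_prob_algebra_generated[OF sets_PiM Int_stable_prod_algebra prod_algebra_sets_into_space])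
  show "prob_space (K N j c)" for c by (rule K_prob)
  show "sets (K N j c) = sets (S N)" for c by (rule sets_K)
  fix X assume X: "X \<in> prod_algebra {..<N} (\<lambda>_. mu)"
  then obtain E where XE: "X = Pi\<^sub>E {..<N} E" and E: "E \<in> (\<Pi> i\<in>{..<N}. sets mu)"
    by (rule prod_algebraE_all)
  show "(\<lambda>c. emeasure (K N j c) X) \<in> borel_measurable (S N)"
  proof (cases "N = 0")
    case True
    then show ?thesis unfolding K_def by (simp add: PiM_empty)
  next
    case False
    then have N: "1 \<le> N" by simp
    have eq: "emeasure (K N j c) X = (\<Prod>i<N. \<integral>\<^sup>+x. ennreal (G N j c x) * indicator (E i) x \<partial>mu)" for c
    proof -
      interpret PS: product_sigma_finite "\<lambda>_. density mu (\<lambda>x. ennreal (G N j c x))"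
        unfolding product_sigma_finite_def
        using prob_space_imp_sigma_finite[OF prob_Dm[OF good_G[OF N]]] by simp
      have "emeasure (K N j c) X = (\<Prod>i<N. emeasure (density mu (\<lambda>x. ennreal (G N j c x))) (E i))"
        unfolding K_def XE using E by (intro PS.emeasure_PiM) auto
      also have "\<dots> = (\<Prod>i<N. \<integral>\<^sup>+x. ennreal (G N j c x) * indicator (E i) x \<partial>mu)"
        using E good_meas[OF good_G[OF N]]
        by (intro prod.cong refl emeasure_density) auto
      finally show ?thesis .
    qed
    have Gm: "(\<lambda>(c, x). ennreal (G N j c x) * indicator (E i) x) \<in> borel_measurable (S N \<Otimes>\<^sub>M mu)" if i: "i < N" for i
    proof -
      have Ei[measurable]: "E i \<in> sets mu" using E i by auto
      have "(\<lambda>w. ennreal ((\<lambda>(c, x). G N j c x) w) * indicator (E i) (snd w)) \<in> borel_measurable (S N \<Otimes>\<^sub>M mu)"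
        using G_meas_pair by measurable
      then show ?thesis by (simp add: case_prod_beta)
    qed
    show ?thesis unfolding eq
      by (intro borel_measurable_prod_ennreal mu.borel_measurable_nn_integral Gm) simp
  qed
qed

lemma Mc_facts: "prob_space (Mc N j) \<and> sets (Mc N j) = sets (S N)"
proof (induction j)
  case 0
  have eq: "Mc N 0 = PiM {..<N} (\<lambda>_. density mu (\<lambda>x. ennreal (a0 x)))" by simp
  have "prob_space (PiM {..<N} (\<lambda>_. density mu (\<lambda>x. ennreal (a0 x))))"
    by (rule prob_space_PiM) (rule prob_Dm[OF a0_good])
  moreover have "sets (PiM {..<N} (\<lambda>_. density mu (\<lambda>x. ennreal (a0 x)))) = sets (S N)"
    by (rule sets_PD)
  ultimately show ?case unfolding eq by simp
next
  case (Suc j)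
  then interpret M: prob_space "Mc N j" by simp
  have Km: "K N j \<in> Mc N j \<rightarrow>\<^sub>M subprob_algebra (S N)"
    using measurable_prob_algebraD[OF K_meas, of N j] Suc
    by (simp only: measurable_cong_sets[of "Mc N j" "S N", OF _ refl])
  have eq: "Mc N (Suc j) = Mc N j \<bind> K N j" by (simp add: K_def[abs_def])
  have "prob_space (Mc N j \<bind> K N j)"
    by (rule M.prob_space_bind[OF _ Km]) (simp add: K_prob)
  moreover have "sets (Mc N j \<bind> K N j) = sets (S N)"
    by (rule sets_bind[OF sets_K M.not_empty])
  ultimately show ?case unfolding eq by simp
qed



lemma d1_sym: "d1 f g = d1 g f" unfolding d1_def by (simp add: abs_minus_commute)

lemma d1_tri:
  assumes "integrable mu f" "integrable mu g" "integrable mu k"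
  shows "d1 f k \<le> d1 f g + d1 g k"
proof -
  have "d1 f k \<le> (\<integral>x. \<bar>f x - g x\<bar> + \<bar>g x - k x\<bar> \<partial>mu)" unfolding d1_def
    by (rule integral_mono) (use assms in auto)
  also have "\<dots> = d1 f g + d1 g k" unfolding d1_def using assms by (simp add: Bochner_Integration.integral_add)
  finally show ?thesis .
qed

definition "Kc = 2 * Cb^2 / ca"
lemma Kc_pos: "0 < Kc" unfolding Kc_def using Cb_pos ca_pos by simp

definition "W N T j c = d1 (prp (Suc j) (T - Suc j) (G N j c)) (opt T)"

lemma W_meas: "W N T j \<in> borel_measurable (S N)"
  unfolding W_def[abs_def]
  by (rule d1_meas_pair[OF prp_meas_pair[OF G_meas_pair] good_meas[OF good_opt]])

lemma W_step:
  assumes N: "1 \<le> N" and T: "Suc (Suc j) \<le> T"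
  shows "W N T (Suc j) c' \<le> W N T j c + L^(T - Suc (Suc j)) * Kc * d1 (mN N c') (A (G N j c))"
proof -
  define k where "k = T - Suc (Suc j)"
  have Tk: "T - Suc j = Suc k" unfolding k_def using T by simp
  have gG: "good (G N j c)" by (rule good_G[OF N])
  have gG': "good (G N (Suc j) c')" by (rule good_G[OF N])
  have gP: "good (Phi (Suc j) (G N j c))" by (rule good_Phi[OF gG])
  have e1: "prp (Suc j) (T - Suc j) (G N j c) = prp (Suc (Suc j)) k (Phi (Suc j) (G N j c))"
    unfolding Tk by (rule prp_Suc')
  have e2: "T - Suc (Suc j) = k" unfolding k_def ..
  have "W N T (Suc j) c' \<le> d1 (prp (Suc (Suc j)) k (G N (Suc j) c')) (prp (Suc (Suc j)) k (Phi (Suc j) (G N j c)))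
      + d1 (prp (Suc (Suc j)) k (Phi (Suc j) (G N j c))) (opt T)"
    unfolding W_def e2
    by (rule d1_tri) (auto intro: good_int good_prp gG' gP good_opt)
  also have "d1 (prp (Suc (Suc j)) k (Phi (Suc j) (G N j c))) (opt T) = W N T j c"
    unfolding W_def e1 ..
  also have "d1 (prp (Suc (Suc j)) k (G N (Suc j) c')) (prp (Suc (Suc j)) k (Phi (Suc j) (G N j c)))
      \<le> L^k * d1 (G N (Suc j) c') (Phi (Suc j) (G N j c))"
    by (rule prp_lip[OF gG' gP])
  also have "d1 (G N (Suc j) c') (Phi (Suc j) (G N j c)) \<le> Kc * d1 (mN N c') (A (G N j c))"
    unfolding G_eq[of N "Suc j"] Phi_def Kc_def
    by (rule Psi_lip[OF pred_mN[OF N] pred_A[OF gG]])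
  finally show ?thesis unfolding k_def
    using L_ge1 by (smt (verit) mult.assoc mult_left_mono zero_le_power)
qed

lemma W_base0:
  assumes N: "1 \<le> N" and T: "1 \<le> T"
  shows "W N T 0 c \<le> L^(T - 1) * Kc * d1 (mN N c) (A a0)"
proof -
  have eT: "opt T = prp 1 (T - 1) (opt 1)" using opt_prp[of 1 "T - 1"] T by simp
  have o1: "opt 1 = Psi 0 (A a0)" using opt_Suc[of 0] unfolding Phi_def by simp
  have "W N T 0 c = d1 (prp 1 (T - 1) (G N 0 c)) (prp 1 (T - 1) (opt 1))"
    unfolding W_def eT by simp
  also have "\<dots> \<le> L^(T - 1) * d1 (G N 0 c) (opt 1)"
    by (rule prp_lip[OF good_G[OF N] good_opt])
  also have "d1 (G N 0 c) (opt 1) \<le> Kc * d1 (mN N c) (A a0)"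
    unfolding G_eq o1 Kc_def by (rule Psi_lip[OF pred_mN[OF N] pred_A[OF a0_good]])
  finally show ?thesis
    using L_ge1 by (smt (verit) mult.assoc mult_left_mono zero_le_power)
qed

lemma W_forget:
  assumes N: "1 \<le> N" and T: "T = Suc j + Suc k"
  shows "W N T j c \<le> (1 / eps^2 - 1) * (1 - eps)^k"
proof -
  have "W N T j c = d1 (prp (Suc j) (Suc k) (G N j c)) (prp (Suc j) (Suc k) (opt (Suc j)))"
    unfolding W_def T opt_prp by simp
  also have "\<dots> \<le> (1 / eps^2 - 1) * (1 - eps)^k"
    by (rule forget[OF good_G[OF N] good_opt])
  finally show ?thesis .
qed


definition "beta N d = 4 * Ca / d * exp (- real N * d^2 / (2 * Ca^2))"

lemma beta_nonneg: "0 < d \<Longrightarrow> 0 \<le> beta N d" unfolding beta_def using Ca_pos by simp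

lemma sig_meas: "{c' \<in> space (S N). d < d1 (mN N c') q} \<in> sets (S N)" if "q \<in> borel_measurable mu" for q d
proof -
  have "(\<lambda>c'. d1 (mN N c') q) \<in> borel_measurable (S N)"
    by (rule d1_meas_pair[OF mN_meas_pair that])
  then show ?thesis by measurable
qed

lemma step_prob:
  assumes N: "1 \<le> N" and T: "Suc (Suc j) \<le> T" and d: "0 < d"
    and eta: "L^(T - Suc (Suc j)) * Kc * d \<le> \<eta>"
    and Wc: "W N T j c \<le> x"
  shows "measure (K N j c) {c' \<in> space (S N). x + \<eta> < W N T (Suc j) c'} \<le> beta N d"
proof -
  define p where "p = G N j c"
  have gp: "good p" unfolding p_def by (rule good_G[OF N])
  define Lk where "Lk = L^(T - Suc (Suc j)) * Kc"
  have Lk: "0 < Lk" unfolding Lk_def using L_ge1 Kc_pos by simp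
  interpret KP: prob_space "K N j c" by (rule K_prob)
  have Bm: "{c' \<in> space (S N). d < d1 (mN N c') (A p)} \<in> sets (K N j c)"
    unfolding sets_K by (rule sig_meas[OF A_meas[OF good_meas[OF gp]]])
  have sub: "{c' \<in> space (S N). x + \<eta> < W N T (Suc j) c'} \<subseteq> {c' \<in> space (S N). d < d1 (mN N c') (A p)}"
  proof safe
    fix c' assume "c' \<in> space (S N)" and lt: "x + \<eta> < W N T (Suc j) c'"
    have "W N T (Suc j) c' \<le> W N T j c + Lk * d1 (mN N c') (A p)"
      unfolding Lk_def p_def by (rule W_step[OF N T])
    with lt Wc have "\<eta> < Lk * d1 (mN N c') (A p)" by simp
    with eta have "Lk * d < Lk * d1 (mN N c') (A p)" unfolding Lk_def by simp
    then show "d < d1 (mN N c') (A p)" using Lk by simp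
  qed
  have "measure (K N j c) {c' \<in> space (S N). x + \<eta> < W N T (Suc j) c'}
      \<le> measure (K N j c) {c' \<in> space (S N). d < d1 (mN N c') (A p)}"
    by (rule KP.finite_measure_mono[OF sub Bm])
  also have "\<dots> \<le> beta N d"
    using conc[OF gp N d] unfolding K_def p_def beta_def space_PD by simp
  finally show ?thesis .
qed

lemma chain:
  assumes N: "1 \<le> N" and d: "0 < d" and T: "j0 + n < T" and Tk: "T \<le> j0 + k0 + 2"
  shows "measure (Mc N (j0 + n)) {c \<in> space (S N). x0 + real n * (L^k0 * Kc * d) < W N T (j0 + n) c}
     \<le> measure (Mc N j0) {c \<in> space (S N). x0 < W N T j0 c} + real n * beta N d"
  using T
proof (induction n)
  case 0 then show ?case by simp
next
  case (Suc n)
  define j where "j = j0 + n"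
  define \<eta> where "\<eta> = L^k0 * Kc * d"
  have Tj: "Suc (Suc j) \<le> T" using Suc.prems unfolding j_def by simp
  have eta: "L^(T - Suc (Suc j)) * Kc * d \<le> \<eta>"
  proof -
    have "T - Suc (Suc j) \<le> k0" using Tk unfolding j_def by simp
    then have "L^(T - Suc (Suc j)) \<le> L^k0" using L_ge1 by (intro power_increasing) auto
    then show ?thesis unfolding \<eta>_def using Kc_pos d by (intro mult_right_mono) auto
  qed
  have eq: "Mc N (Suc j) = Mc N j \<bind> K N j" by (simp add: K_def[abs_def])
  have "measure (Mc N j \<bind> K N j) {c' \<in> space (S N). (x0 + real n * \<eta>) + \<eta> < W N T (Suc j) c'}
      \<le> measure (Mc N j) {c \<in> space (S N). x0 + real n * \<eta> < W N T j c} + beta N d"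
    using Mc_facts[of N j]
    by (intro step_bind[OF _ _ K_meas W_meas W_meas beta_nonneg[OF d]] step_prob[OF N Tj d eta]) auto
  also have "measure (Mc N j) {c \<in> space (S N). x0 + real n * \<eta> < W N T j c}
      \<le> measure (Mc N j0) {c \<in> space (S N). x0 < W N T j0 c} + real n * beta N d"
    using Suc unfolding j_def \<eta>_def by simp
  finally have fin: "measure (Mc N j \<bind> K N j) {c' \<in> space (S N). (x0 + real n * \<eta>) + \<eta> < W N T (Suc j) c'}
      \<le> measure (Mc N j0) {c \<in> space (S N). x0 < W N T j0 c} + real (Suc n) * beta N d"
    by (simp add: algebra_simps)
  have seq: "{c \<in> space (S N). x0 + real (Suc n) * \<eta> < W N T (Suc j) c}
      = {c' \<in> space (S N). (x0 + real n * \<eta>) + \<eta> < W N T (Suc j) c'}"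
    by (auto simp: algebra_simps)
  have jj: "j0 + Suc n = Suc j" unfolding j_def by simp
  show ?case unfolding jj eq \<eta>_def[symmetric] seq by (rule fin)
qed


lemma space_Mc: "space (Mc N j) = space (S N)"
  using Mc_facts[of N j] by (intro sets_eq_imp_space_eq) simp

lemma event_eq:
  assumes N: "1 \<le> N" and e: "0 \<le> e"
  shows "{xs \<in> space (Mc N j). ennreal e < (\<integral>\<^sup>+x. ennreal \<bar>mc_filter mu a0 a b y N (Suc j) xs x - opt (Suc j) x\<bar> \<partial>mu)}
       = {c \<in> space (S N). e < W N (Suc j) j c}"
proof -
  have "(\<integral>\<^sup>+x. ennreal \<bar>G N j c x - opt (Suc j) x\<bar> \<partial>mu) = ennreal (W N (Suc j) j c)" for c
  proof -
    have "W N (Suc j) j c = d1 (G N j c) (opt (Suc j))" unfolding W_def by simp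
    moreover have "(\<integral>\<^sup>+x. ennreal \<bar>G N j c x - opt (Suc j) x\<bar> \<partial>mu) = ennreal (d1 (G N j c) (opt (Suc j)))"
    proof -
      have i1: "integrable mu (G N j c)" by (rule good_int[OF good_G[OF N]])
      have i2: "integrable mu (opt (Suc j))" by (rule good_int[OF good_opt])
      have "integrable mu (\<lambda>x. \<bar>G N j c x - opt (Suc j) x\<bar>)"
        by (intro integrable_abs Bochner_Integration.integrable_diff i1 i2)
      then show ?thesis unfolding d1_def by (intro nn_integral_eq_integral) auto
    qed
    ultimately show ?thesis by simp
  qed
  then show ?thesis unfolding space_Mc using e by (auto simp: ennreal_less_iff)
qed

lemma main:
  assumes e: "0 < e"
  shows "\<exists>c1 c2::real. 0 < c2 \<and> (\<forall>t N. mc_error_prob mu a0 a b y N t e \<le> c1 * exp (- c2 * real N))"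
proof -
  define C where "C = 1 / eps^2 - 1"
  have lim: "(\<lambda>n. C * (1 - eps)^n) \<longlonglongrightarrow> C * 0"
    by (intro tendsto_mult tendsto_const LIMSEQ_power_zero) (use eps_pos eps_le1 in auto)
  have "eventually (\<lambda>n. C * (1 - eps)^n < e / 2) sequentially"
    using order_tendstoD(2)[OF lim, of "e / 2"] e by simp
  then obtain k0 where k0: "C * (1 - eps)^k0 < e / 2" by (auto simp: eventually_sequentially)
  define Lk where "Lk = L^k0 * Kc"
  have Lk: "0 < Lk" unfolding Lk_def using L_ge1 Kc_pos by simp
  define d where "d = e / (2 * (real k0 + 1) * Lk)"
  have d: "0 < d" unfolding d_def using e Lk by simp
  define \<eta> where "\<eta> = L^k0 * Kc * d"
  have eta: "(real k0 + 1) * \<eta> = e / 2"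
  proof -
    have "\<eta> = Lk * d" unfolding \<eta>_def Lk_def by simp
    also have "\<dots> = e / (2 * (real k0 + 1))" unfolding d_def using Lk by simp
    finally have "\<eta> = e / (2 * (real k0 + 1))" .
    moreover have "(real k0 + 1) * (e / (2 * (real k0 + 1))) = e / 2"
      by (simp add: field_simps)
    ultimately show ?thesis by simp
  qed
  have eta0: "0 < \<eta>" unfolding \<eta>_def using Lk d unfolding Lk_def by simp
  define c2 where "c2 = d^2 / (2 * Ca^2)"
  define c1 where "c1 = max 1 ((real k0 + 1) * (4 * Ca / d))"
  have c2: "0 < c2" unfolding c2_def using d Ca_pos by simp
  have beta_eq: "beta N d = 4 * Ca / d * exp (- c2 * real N)" for N
    unfolding beta_def c2_def by (simp add: field_simps)
  have fin: "(real k0 + 1) * beta N d \<le> c1 * exp (- c2 * real N)" for N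
  proof -
    have "(real k0 + 1) * beta N d = ((real k0 + 1) * (4 * Ca / d)) * exp (- c2 * real N)"
      unfolding beta_eq by simp
    also have "\<dots> \<le> c1 * exp (- c2 * real N)"
      unfolding c1_def by (intro mult_right_mono) auto
    finally show ?thesis .
  qed
  show ?thesis
  proof (intro exI conjI allI)
    show "0 < c2" by (rule c2)
    fix t N
    show "mc_error_prob mu a0 a b y N t e \<le> c1 * exp (- c2 * real N)"
    proof (cases "N = 0")
      case True
      interpret P: prob_space "Mc N (t - 1)" using Mc_facts by simp
      have "mc_error_prob mu a0 a b y N t e \<le> 1" unfolding mc_error_prob_def by (rule P.prob_le_1)
      also have "1 \<le> c1" unfolding c1_def by simp
      finally show ?thesis using True by simp
    next
      case False
      then have N: "1 \<le> N" by simp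
      show ?thesis
      proof (cases t)
        case 0
        have "mc_error_prob mu a0 a b y N t e = 0" unfolding mc_error_prob_def 0 mc_filter_def by simp
        also have "0 \<le> c1 * exp (- c2 * real N)" unfolding c1_def by simp
        finally show ?thesis .
      next
        case (Suc j)
        interpret PJ: prob_space "Mc N j" using Mc_facts by simp
        have sJ: "sets (Mc N j) = sets (S N)" using Mc_facts by simp
        have err: "mc_error_prob mu a0 a b y N t e = measure (Mc N j) {c \<in> space (S N). e < W N (Suc j) j c}"
          unfolding mc_error_prob_def Suc using event_eq[OF N, of e j] e by simp
        have "measure (Mc N j) {c \<in> space (S N). e < W N (Suc j) j c} \<le> (real k0 + 1) * beta N d"
        proof (cases "j \<le> k0")
          case True
          have ch: "measure (Mc N (0 + j)) {c \<in> space (S N). \<eta> + real j * (L^k0 * Kc * d) < W N (Suc j) (0 + j) c}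
              \<le> measure (Mc N 0) {c \<in> space (S N). \<eta> < W N (Suc j) 0 c} + real j * beta N d"
            by (rule chain[OF N d]) (use True in auto)
          have base: "measure (Mc N 0) {c \<in> space (S N). \<eta> < W N (Suc j) 0 c} \<le> beta N d"
          proof -
            interpret P0: prob_space "Mc N 0" using Mc_facts[of N 0] by (simp only:)
            have sub: "{c \<in> space (S N). \<eta> < W N (Suc j) 0 c} \<subseteq> {c \<in> space (S N). d < d1 (mN N c) (A a0)}"
            proof safe
              fix c assume "c \<in> space (S N)" "\<eta> < W N (Suc j) 0 c"
              moreover have "W N (Suc j) 0 c \<le> L^j * Kc * d1 (mN N c) (A a0)"
                using W_base0[OF N, of "Suc j" c] by simp
              moreover have "L^j * Kc * d1 (mN N c) (A a0) \<le> Lk * d1 (mN N c) (A a0)"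
                unfolding Lk_def using True L_ge1 Kc_pos d1_nonneg
                by (intro mult_right_mono power_increasing) auto
              ultimately have "Lk * d < Lk * d1 (mN N c) (A a0)" unfolding \<eta>_def Lk_def by simp
              then show "d < d1 (mN N c) (A a0)" using Lk by simp
            qed
            have Bm: "{c \<in> space (S N). d < d1 (mN N c) (A a0)} \<in> sets (Mc N 0)"
              using Mc_facts[of N 0] sig_meas[OF A_meas[OF good_meas[OF a0_good]], of N d] by simp
            have "measure (Mc N 0) {c \<in> space (S N). \<eta> < W N (Suc j) 0 c}
                \<le> measure (Mc N 0) {c \<in> space (S N). d < d1 (mN N c) (A a0)}"
              by (rule P0.finite_measure_mono[OF sub Bm])
            also have "\<dots> \<le> beta N d"
              using conc[OF a0_good N d] unfolding beta_def space_PD by simp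
            finally show ?thesis .
          qed
          have sub: "{c \<in> space (S N). e < W N (Suc j) j c} \<subseteq> {c \<in> space (S N). \<eta> + real j * (L^k0 * Kc * d) < W N (Suc j) j c}"
          proof -
            have "\<eta> + real j * \<eta> \<le> (real k0 + 1) * \<eta>" using True eta0 by (simp add: algebra_simps)
            then have "\<eta> + real j * (L^k0 * Kc * d) \<le> e" using eta e unfolding \<eta>_def by simp
            then show ?thesis by auto
          qed
          have Bm: "{c \<in> space (S N). \<eta> + real j * (L^k0 * Kc * d) < W N (Suc j) j c} \<in> sets (Mc N j)"
            unfolding sJ using W_meas by measurable
          have "measure (Mc N j) {c \<in> space (S N). e < W N (Suc j) j c}
              \<le> measure (Mc N j) {c \<in> space (S N). \<eta> + real j * (L^k0 * Kc * d) < W N (Suc j) j c}"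
            by (rule PJ.finite_measure_mono[OF sub Bm])
          also have "\<dots> \<le> beta N d + real j * beta N d" using ch base by simp
          also have "\<dots> \<le> (real k0 + 1) * beta N d"
            using True beta_nonneg[OF d, of N] by (simp add: algebra_simps mult_right_mono)
          finally show ?thesis .
        next
          case False
          define j0 where "j0 = j - Suc k0"
          have jj: "j0 + Suc k0 = j" unfolding j0_def using False by simp
          define x0 where "x0 = C * (1 - eps)^k0"
          have ch: "measure (Mc N (j0 + Suc k0)) {c \<in> space (S N). x0 + real (Suc k0) * (L^k0 * Kc * d) < W N (Suc j) (j0 + Suc k0) c}
              \<le> measure (Mc N j0) {c \<in> space (S N). x0 < W N (Suc j) j0 c} + real (Suc k0) * beta N d"
            by (rule chain[OF N d]) (use jj in auto)
          have empty: "{c \<in> space (S N). x0 < W N (Suc j) j0 c} = {}"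
          proof -
            have "Suc j = Suc j0 + Suc k0" using jj by simp
            then have "W N (Suc j) j0 c \<le> x0" for c unfolding x0_def C_def by (rule W_forget[OF N])
            then show ?thesis by (auto simp: not_less[symmetric])
          qed
          have sub: "{c \<in> space (S N). e < W N (Suc j) j c} \<subseteq> {c \<in> space (S N). x0 + real (Suc k0) * (L^k0 * Kc * d) < W N (Suc j) j c}"
          proof -
            have "x0 + real (Suc k0) * (L^k0 * Kc * d) \<le> e"
              using k0 eta unfolding x0_def \<eta>_def by (simp add: algebra_simps)
            then show ?thesis by auto
          qed
          have Bm: "{c \<in> space (S N). x0 + real (Suc k0) * (L^k0 * Kc * d) < W N (Suc j) j c} \<in> sets (Mc N j)"
            unfolding sJ using W_meas by measurable
          have "measure (Mc N j) {c \<in> space (S N). e < W N (Suc j) j c}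
              \<le> measure (Mc N j) {c \<in> space (S N). x0 + real (Suc k0) * (L^k0 * Kc * d) < W N (Suc j) j c}"
            by (rule PJ.finite_measure_mono[OF sub Bm])
          also have "\<dots> \<le> real (Suc k0) * beta N d" using ch unfolding jj empty by simp
          finally show ?thesis by (simp add: add.commute)
        qed
        then show ?thesis unfolding err using fin[of N] by simp
      qed
    qed
  qed
qed

end


theorem theorem2:
  fixes mu :: "'a::polish_space measure" and nu :: "'b measure"
    and a0 h :: "'a \<Rightarrow> real" and a :: "'a \<Rightarrow> 'a \<Rightarrow> real"
    and b :: "nat \<Rightarrow> 'a \<Rightarrow> 'b \<Rightarrow> real" and y :: "nat \<Rightarrow> 'b"
    and ca Ca Cb :: real
  assumes mu_borel: "sets mu = sets borel"
    and mu_sf: "sigma_finite_measure mu"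
    and a0_meas: "a0 \<in> borel_measurable mu"
    and a0_nonneg: "\<And>x. a0 x \<ge> 0"
    and a0_int: "integrable mu a0" and a0_one: "(\<integral>x. a0 x \<partial>mu) = 1"
    and a_meas: "(\<lambda>(x', x). a x' x) \<in> borel_measurable (mu \<Otimes>\<^sub>M mu)"
    and a_nonneg: "\<And>x' x. a x' x \<ge> 0"
    and a_int: "\<And>x'. integrable mu (a x')"
    and a_one: "\<And>x'. (\<integral>x. a x' x \<partial>mu) = 1"
    and a_cont: "\<And>x. ((\<lambda>x'. \<integral>z. \<bar>a x' z - a x z\<bar> \<partial>mu) \<longlongrightarrow> 0) (at x)"
    and h_meas: "h \<in> borel_measurable mu"
    and h_nonneg: "\<And>x. h x \<ge> 0"
    and h_int: "integrable mu h" and h_one: "(\<integral>x. h x \<partial>mu) = 1"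
    and ca_pos: "0 < ca" and ca_Ca: "ca \<le> Ca"
    and a_bounds: "\<And>x' x. ca * h x \<le> a x' x \<and> a x' x \<le> Ca * h x"
    and b_meas: "\<And>t. t \<ge> 1 \<Longrightarrow> (\<lambda>(x, v). b t x v) \<in> borel_measurable (mu \<Otimes>\<^sub>M nu)"
    and b_int: "\<And>t x. t \<ge> 1 \<Longrightarrow> integrable nu (b t x)"
    and b_one: "\<And>t x. t \<ge> 1 \<Longrightarrow> (\<integral>v. b t x v \<partial>nu) = 1"
    and b_pos: "\<And>t x v. t \<ge> 1 \<Longrightarrow> v \<in> space nu \<Longrightarrow> b t x v > 0"
    and b_ratio: "\<And>t x x' v. t \<ge> 1 \<Longrightarrow> v \<in> space nu \<Longrightarrow> b t x v \<le> Cb * b t x' v"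
    and y_in: "\<And>t. y t \<in> space nu"
    and eps_pos: "0 < (eps::real)"
  shows "\<exists>c1 c2::real. 0 < c2 \<and>
           (\<forall>t N. mc_error_prob mu a0 a b y N t eps \<le> c1 * exp (- c2 * real N))"
  proof -
  have space_mu: "space mu = UNIV" using sets_eq_imp_space_eq[OF mu_borel] by simp
  have e0: "0 < eps" by (rule eps_pos)
  interpret F: flt mu a h ca Ca "\<lambda>n x. b (Suc n) x (y (Suc n))" Cb
  proof (rule flt.intro)
    show "sigma_finite_measure mu" by (rule mu_sf)
    show "space mu = UNIV" by (rule space_mu)
    show "(\<lambda>(x', x). a x' x) \<in> borel_measurable (mu \<Otimes>\<^sub>M mu)" by (rule a_meas)
    show "h \<in> borel_measurable mu" by (rule h_meas)
    show "\<And>x. 0 \<le> h x" by (rule h_nonneg)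
    show "integrable mu h" by (rule h_int)
    show "(\<integral>x. h x \<partial>mu) = 1" by (rule h_one)
    show "0 < ca" by (rule ca_pos)
    show "ca \<le> Ca" by (rule ca_Ca)
    show "\<And>x' x. ca * h x \<le> a x' x \<and> a x' x \<le> Ca * h x" by (rule a_bounds)
    show "\<And>n. (\<lambda>x. b (Suc n) x (y (Suc n))) \<in> borel_measurable mu"
    proof -
      fix n
      have "(\<lambda>x. (x, y (Suc n))) \<in> mu \<rightarrow>\<^sub>M mu \<Otimes>\<^sub>M nu" by (rule measurable_Pair2'[OF y_in])
      from measurable_compose[OF this b_meas[of "Suc n"]] show "(\<lambda>x. b (Suc n) x (y (Suc n))) \<in> borel_measurable mu"
        by simp
    qed
    show "\<And>n x. 0 < b (Suc n) x (y (Suc n))" using b_pos y_in by simp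
    show "\<And>n x x'. b (Suc n) x (y (Suc n)) \<le> Cb * b (Suc n) x' (y (Suc n))" using b_ratio y_in by simp
  qed
  have g0: "F.good a0" unfolding F.good_def using a0_meas a0_nonneg a0_int a0_one by simp
  interpret flt2 mu a h ca Ca b y Cb a0
    by (intro flt2.intro F.flt_axioms flt2_axioms.intro g0)
  note mm = main[OF e0]
  show ?thesis using mm by simp
qed

end
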